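(* Let $H$ be a $k$-linear semi-Hopf category, let $A$ be a right $H$-comodule category and let $B=A^{{\rm co}H}$. The following are equivalent: (1) ${\rm can}^z_{xy}$ is bijective for all $x,y,z\in X$; (2) for all $x,y\in X$, ${\rm can}^y_{xy}$ is bijective and ${\rm can}^x_{xy}$ has a left inverse; (3) for all $x,y\in X$ there is a $k$-linear map $\gamma_{xy}:H_{xy}\to A_{yx}\otimes_{B_x}A_{xy}$, written $\gamma_{xy}(h)=\sum_i l_i(h)\otimes_{B_x}r_i(h)$, such that for all $h\in H_{xy}$ and $a\in A_{xy}$: $$\sum_i l_i(h)r_i(h)_{[0]}\otimes r_i(h)_{[1]}=1_y\otimes h,\qquad \sum_i a_{[0]}l_i(a_{[1]})\otimes_{B_x}r_i(a_{[1]})=1_x\otimes_{B_x}a.$$ (When these hold, $A$ is called an $H$-Galois category extension of $B$.)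
   Context: Let $k$ be a commutative ring; unadorned $\otimes$ is over $k$. A $k$-linear category $A$ with class of objects $X$ consists of $k$-modules $A_{xy}$, associative compositions $A_{xy}\otimes A_{yz}\to A_{xz}$, $a\otimes b\mapsto ab$, and units $1_x\in A_{xx}$. A $k$-linear semi-Hopf category $H$ (objects $X$) is a $k$-linear category in which each $H_{xy}$ is a $k$-coalgebra with $\Delta_{xy}(h)=h_{(1)}\otimes h_{(2)}$ and counit $\varepsilon_{xy}$, such that $\Delta_{xz}(hh')=h_{(1)}h'_{(1)}\otimes h_{(2)}h'_{(2)}$, $\Delta_{xx}(1_x)=1_x\otimes1_x$, $\varepsilon_{xz}(hh')=\varepsilon_{xy}(h)\varepsilon_{yz}(h')$, $\varepsilon_{xx}(1_x)=1$. A right $H$-comodule category is a $k$-linear category $A$ with objects $X$ such that each $A_{xy}$ is a right $H_{xy}$-comodule, $\rho_{xy}(a)=a_{[0]}\otimes a_{[1]}$, with $\rho_{xz}(ab)=a_{[0]}b_{[0]}\otimes a_{[1]}b_{[1]}$ and $\rho_{xx}(1_x)=1_x\otimes1_x$. Its coinvariants are the $k$-algebras $B_x=A^{{\rm co}H}_x=\{a\in A_{xx}\mid\rho_{xx}(a)=a\otimes1_x\}$; $A_{xy}$ is a $B_x$-$B_y$-bimodule by multiplication. The canonical maps are ${\rm can}^z_{xy}:A_{zx}\otimes_{B_x}A_{xy}\to A_{zy}\otimes H_{xy}$, ${\rm can}^z_{xy}(a\otimes_{B_x}a')=aa'_{[0]}\otimes a'_{[1]}$. *)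

theory Defs
  imports Main
begin

record ('a, 'k) kmod =
  kcarrier :: "'a set"
  kadd :: "'a \<Rightarrow> 'a \<Rightarrow> 'a"
  kzero :: "'a"
  ksmult :: "'k \<Rightarrow> 'a \<Rightarrow> 'a"

definition is_kmod :: "('a, 'k::comm_ring_1) kmod \<Rightarrow> bool" where
  "is_kmod M \<longleftrightarrow>
     kzero M \<in> kcarrier M \<and>
     (\<forall>x\<in>kcarrier M. \<forall>y\<in>kcarrier M. kadd M x y \<in> kcarrier M) \<and>
     (\<forall>c. \<forall>x\<in>kcarrier M. ksmult M c x \<in> kcarrier M) \<and>
     (\<forall>x\<in>kcarrier M. \<forall>y\<in>kcarrier M. \<forall>z\<in>kcarrier M.
        kadd M (kadd M x y) z = kadd M x (kadd M y z)) \<and>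
     (\<forall>x\<in>kcarrier M. \<forall>y\<in>kcarrier M. kadd M x y = kadd M y x) \<and>
     (\<forall>x\<in>kcarrier M. kadd M (kzero M) x = x) \<and>
     (\<forall>x\<in>kcarrier M. \<exists>y\<in>kcarrier M. kadd M x y = kzero M) \<and>
     (\<forall>c. \<forall>x\<in>kcarrier M. \<forall>y\<in>kcarrier M.
        ksmult M c (kadd M x y) = kadd M (ksmult M c x) (ksmult M c y)) \<and>
     (\<forall>c d. \<forall>x\<in>kcarrier M. ksmult M (c + d) x = kadd M (ksmult M c x) (ksmult M d x)) \<and>
     (\<forall>c d. \<forall>x\<in>kcarrier M. ksmult M (c * d) x = ksmult M c (ksmult M d x)) \<and>
     (\<forall>x\<in>kcarrier M. ksmult M 1 x = x)"

definition linmap :: "('a, 'k) kmod \<Rightarrow> ('b, 'k) kmod \<Rightarrow> ('a \<Rightarrow> 'b) \<Rightarrow> bool" where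
  "linmap M N f \<longleftrightarrow>
     (\<forall>x\<in>kcarrier M. f x \<in> kcarrier N) \<and>
     (\<forall>x\<in>kcarrier M. \<forall>y\<in>kcarrier M. f (kadd M x y) = kadd N (f x) (f y)) \<and>
     (\<forall>c. \<forall>x\<in>kcarrier M. f (ksmult M c x) = ksmult N c (f x))"

definition ksum :: "('a, 'k) kmod \<Rightarrow> ('i \<Rightarrow> 'a) \<Rightarrow> 'i set \<Rightarrow> 'a" where
  "ksum T g S = Finite_Set.fold (\<lambda>q acc. kadd T (g q) acc) (kzero T) S"

text \<open>
  The tensor product of M and N, balanced with respect to a set Bal of pairs
  (p, q) of elements of M x N (meaning p and q are to be identified), is
  constructed as the free abelian group on pairs (m, n), m in M, n in N,
  modulo biadditivity and the balancing relations.  Elements are cosets of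
  finitely supported integer-valued functions on M x N.  The k-action is
  through the left factor.  With Bal = kbal M N this is the tensor product
  over k; adding the relations (m b, n) ~ (m, b n) for b in an algebra B
  gives the tensor product over B.
\<close>

definition delta :: "'p \<Rightarrow> 'p \<Rightarrow> int" where
  "delta p = (\<lambda>q. if q = p then 1 else 0)"

definition tfree :: "('a, 'k) kmod \<Rightarrow> ('b, 'k) kmod \<Rightarrow> ('a \<times> 'b \<Rightarrow> int) set" where
  "tfree M N = {f. finite {p. f p \<noteq> 0} \<and> {p. f p \<noteq> 0} \<subseteq> kcarrier M \<times> kcarrier N}"

inductive_set zspan :: "('p \<Rightarrow> int) set \<Rightarrow> ('p \<Rightarrow> int) set" for S where
  zspan_zero: "(\<lambda>_. 0) \<in> zspan S"
| zspan_gen: "s \<in> S \<Longrightarrow> s \<in> zspan S"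
| zspan_diff: "f \<in> zspan S \<Longrightarrow> g \<in> zspan S \<Longrightarrow> (\<lambda>q. f q - g q) \<in> zspan S"

definition trels :: "('a, 'k) kmod \<Rightarrow> ('b, 'k) kmod \<Rightarrow> (('a \<times> 'b) \<times> ('a \<times> 'b)) set
    \<Rightarrow> ('a \<times> 'b \<Rightarrow> int) set" where
  "trels M N Bal =
     {(\<lambda>q. delta (kadd M m m', n) q - delta (m, n) q - delta (m', n) q) | m m' n.
        m \<in> kcarrier M \<and> m' \<in> kcarrier M \<and> n \<in> kcarrier N}
   \<union> {(\<lambda>q. delta (m, kadd N n n') q - delta (m, n) q - delta (m, n') q) | m n n'.
        m \<in> kcarrier M \<and> n \<in> kcarrier N \<and> n' \<in> kcarrier N}
   \<union> {(\<lambda>q. delta p q - delta p' q) | p p'. (p, p') \<in> Bal}"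

definition tcls :: "('a, 'k) kmod \<Rightarrow> ('b, 'k) kmod \<Rightarrow> (('a \<times> 'b) \<times> ('a \<times> 'b)) set
    \<Rightarrow> ('a \<times> 'b \<Rightarrow> int) \<Rightarrow> ('a \<times> 'b \<Rightarrow> int) set" where
  "tcls M N Bal f = {g \<in> tfree M N. (\<lambda>q. g q - f q) \<in> zspan (trels M N Bal)}"

definition trep :: "('p \<Rightarrow> int) set \<Rightarrow> ('p \<Rightarrow> int)" where
  "trep t = (SOME f. f \<in> t)"

definition fpush :: "('p \<Rightarrow> 'q) \<Rightarrow> ('p \<Rightarrow> int) \<Rightarrow> ('q \<Rightarrow> int)" where
  "fpush \<phi> f = (\<lambda>r. \<Sum>q\<in>{q. f q \<noteq> 0 \<and> \<phi> q = r}. f q)"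

definition tensor :: "('a, 'k) kmod \<Rightarrow> ('b, 'k) kmod \<Rightarrow> (('a \<times> 'b) \<times> ('a \<times> 'b)) set
    \<Rightarrow> (('a \<times> 'b \<Rightarrow> int) set, 'k) kmod" where
  "tensor M N Bal =
     \<lparr> kcarrier = tcls M N Bal ` tfree M N,
       kadd = (\<lambda>t s. tcls M N Bal (\<lambda>q. trep t q + trep s q)),
       kzero = tcls M N Bal (\<lambda>_. 0),
       ksmult = (\<lambda>c t. tcls M N Bal (fpush (\<lambda>(m, n). (ksmult M c m, n)) (trep t))) \<rparr>"

definition tsimple :: "('a, 'k) kmod \<Rightarrow> ('b, 'k) kmod \<Rightarrow> (('a \<times> 'b) \<times> ('a \<times> 'b)) set
    \<Rightarrow> 'a \<Rightarrow> 'b \<Rightarrow> ('a \<times> 'b \<Rightarrow> int) set" where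
  "tsimple M N Bal m n = tcls M N Bal (delta (m, n))"

definition tlift :: "('a, 'k::comm_ring_1) kmod \<Rightarrow> ('b, 'k) kmod \<Rightarrow> (('a \<times> 'b) \<times> ('a \<times> 'b)) set
    \<Rightarrow> ('c, 'k) kmod \<Rightarrow> ('a \<times> 'b \<Rightarrow> 'c) \<Rightarrow> ('a \<times> 'b \<Rightarrow> int) set \<Rightarrow> 'c" where
  "tlift M N Bal T \<beta> t =
     (let f = trep t in ksum T (\<lambda>q. ksmult T (of_int (f q)) (\<beta> q)) {q. f q \<noteq> 0})"

definition tmap :: "('a, 'k::comm_ring_1) kmod \<Rightarrow> ('b, 'k) kmod \<Rightarrow> (('a \<times> 'b) \<times> ('a \<times> 'b)) set
    \<Rightarrow> ('c, 'k) kmod \<Rightarrow> ('d, 'k) kmod \<Rightarrow> (('c \<times> 'd) \<times> ('c \<times> 'd)) set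
    \<Rightarrow> ('a \<Rightarrow> 'c) \<Rightarrow> ('b \<Rightarrow> 'd) \<Rightarrow> ('a \<times> 'b \<Rightarrow> int) set \<Rightarrow> ('c \<times> 'd \<Rightarrow> int) set" where
  "tmap M N Bal M' N' Bal' f g =
     tlift M N Bal (tensor M' N' Bal') (\<lambda>(m, n). tsimple M' N' Bal' (f m) (g n))"

definition kbal :: "('a, 'k) kmod \<Rightarrow> ('b, 'k) kmod \<Rightarrow> (('a \<times> 'b) \<times> ('a \<times> 'b)) set" where
  "kbal M N = {((ksmult M c m, n), (m, ksmult N c n)) | c m n.
                  m \<in> kcarrier M \<and> n \<in> kcarrier N}"

abbreviation ktens where "ktens M N \<equiv> tensor M N (kbal M N)"
abbreviation ksimple where "ksimple M N \<equiv> tsimple M N (kbal M N)"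
abbreviation klift where "klift M N \<equiv> tlift M N (kbal M N)"
abbreviation kmap where "kmap M N M' N' \<equiv> tmap M N (kbal M N) M' N' (kbal M' N')"

definition kassoc :: "('a, 'k::comm_ring_1) kmod \<Rightarrow> ('b, 'k) kmod \<Rightarrow> ('c, 'k) kmod
    \<Rightarrow> ((('a \<times> 'b \<Rightarrow> int) set \<times> 'c) \<Rightarrow> int) set \<Rightarrow> ('a \<times> ('b \<times> 'c \<Rightarrow> int) set \<Rightarrow> int) set" where
  "kassoc M N P =
     klift (ktens M N) P (ktens M (ktens N P))
       (\<lambda>(t, p). klift M N (ktens M (ktens N P))
                  (\<lambda>(m, n). ksimple M (ktens N P) m (ksimple N P n p)) t)"

definition kprod :: "('a1, 'k::comm_ring_1) kmod \<Rightarrow> ('b1, 'k) kmod \<Rightarrow> ('a2, 'k) kmod \<Rightarrow> ('b2, 'k) kmod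
    \<Rightarrow> ('a3, 'k) kmod \<Rightarrow> ('b3, 'k) kmod \<Rightarrow> ('a1 \<Rightarrow> 'a2 \<Rightarrow> 'a3) \<Rightarrow> ('b1 \<Rightarrow> 'b2 \<Rightarrow> 'b3)
    \<Rightarrow> ('a1 \<times> 'b1 \<Rightarrow> int) set \<Rightarrow> ('a2 \<times> 'b2 \<Rightarrow> int) set \<Rightarrow> ('a3 \<times> 'b3 \<Rightarrow> int) set" where
  "kprod M1 N1 M2 N2 M3 N3 f g t s =
     klift M1 N1 (ktens M3 N3)
       (\<lambda>(a, b). klift M2 N2 (ktens M3 N3) (\<lambda>(c, d). ksimple M3 N3 (f a c) (g b d)) s) t"

definition klinform :: "('a, 'k::comm_ring_1) kmod \<Rightarrow> ('a \<Rightarrow> 'k) \<Rightarrow> bool" where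
  "klinform M e \<longleftrightarrow>
     (\<forall>x\<in>kcarrier M. \<forall>y\<in>kcarrier M. e (kadd M x y) = e x + e y) \<and>
     (\<forall>c. \<forall>x\<in>kcarrier M. e (ksmult M c x) = c * e x)"

definition is_coalgebra :: "('h, 'k::comm_ring_1) kmod \<Rightarrow> ('h \<Rightarrow> ('h \<times> 'h \<Rightarrow> int) set)
    \<Rightarrow> ('h \<Rightarrow> 'k) \<Rightarrow> bool" where
  "is_coalgebra C D e \<longleftrightarrow>
     is_kmod C \<and> linmap C (ktens C C) D \<and> klinform C e \<and>
     (\<forall>h\<in>kcarrier C.
        kassoc C C C (kmap C C (ktens C C) C D id (D h)) = kmap C C C (ktens C C) id D (D h)) \<and>
     (\<forall>h\<in>kcarrier C. klift C C C (\<lambda>(a, b). ksmult C (e a) b) (D h) = h) \<and>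
     (\<forall>h\<in>kcarrier C. klift C C C (\<lambda>(a, b). ksmult C (e b) a) (D h) = h)"

definition is_rcomodule :: "('a, 'k::comm_ring_1) kmod \<Rightarrow> ('h, 'k) kmod
    \<Rightarrow> ('h \<Rightarrow> ('h \<times> 'h \<Rightarrow> int) set) \<Rightarrow> ('h \<Rightarrow> 'k) \<Rightarrow> ('a \<Rightarrow> ('a \<times> 'h \<Rightarrow> int) set) \<Rightarrow> bool" where
  "is_rcomodule M C D e rho \<longleftrightarrow>
     is_kmod M \<and> linmap M (ktens M C) rho \<and>
     (\<forall>m\<in>kcarrier M.
        kassoc M C C (kmap M C (ktens M C) C rho id (rho m)) = kmap M C M (ktens C C) id D (rho m)) \<and>
     (\<forall>m\<in>kcarrier M. klift M C M (\<lambda>(a, h). ksmult M (e h) a) (rho m) = m)"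

definition klin_cat :: "'x set \<Rightarrow> ('x \<Rightarrow> 'x \<Rightarrow> ('a, 'k::comm_ring_1) kmod)
    \<Rightarrow> ('x \<Rightarrow> 'x \<Rightarrow> 'x \<Rightarrow> 'a \<Rightarrow> 'a \<Rightarrow> 'a) \<Rightarrow> ('x \<Rightarrow> 'a) \<Rightarrow> bool" where
  "klin_cat X M mul one \<longleftrightarrow>
     (\<forall>x\<in>X. \<forall>y\<in>X. is_kmod (M x y)) \<and>
     (\<forall>x\<in>X. \<forall>y\<in>X. \<forall>z\<in>X. \<forall>a\<in>kcarrier (M x y). \<forall>b\<in>kcarrier (M y z).
        mul x y z a b \<in> kcarrier (M x z)) \<and>
     (\<forall>x\<in>X. \<forall>y\<in>X. \<forall>z\<in>X. \<forall>a\<in>kcarrier (M x y). \<forall>a'\<in>kcarrier (M x y). \<forall>b\<in>kcarrier (M y z).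
        mul x y z (kadd (M x y) a a') b = kadd (M x z) (mul x y z a b) (mul x y z a' b)) \<and>
     (\<forall>x\<in>X. \<forall>y\<in>X. \<forall>z\<in>X. \<forall>a\<in>kcarrier (M x y). \<forall>b\<in>kcarrier (M y z). \<forall>b'\<in>kcarrier (M y z).
        mul x y z a (kadd (M y z) b b') = kadd (M x z) (mul x y z a b) (mul x y z a b')) \<and>
     (\<forall>x\<in>X. \<forall>y\<in>X. \<forall>z\<in>X. \<forall>c. \<forall>a\<in>kcarrier (M x y). \<forall>b\<in>kcarrier (M y z).
        mul x y z (ksmult (M x y) c a) b = ksmult (M x z) c (mul x y z a b) \<and>
        mul x y z a (ksmult (M y z) c b) = ksmult (M x z) c (mul x y z a b)) \<and>
     (\<forall>x\<in>X. \<forall>y\<in>X. \<forall>z\<in>X. \<forall>w\<in>X. \<forall>a\<in>kcarrier (M x y). \<forall>b\<in>kcarrier (M y z). \<forall>c\<in>kcarrier (M z w).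
        mul x z w (mul x y z a b) c = mul x y w a (mul y z w b c)) \<and>
     (\<forall>x\<in>X. one x \<in> kcarrier (M x x)) \<and>
     (\<forall>x\<in>X. \<forall>y\<in>X. \<forall>a\<in>kcarrier (M x y). mul x x y (one x) a = a \<and> mul x y y a (one y) = a)"

definition semi_hopf_cat :: "'x set \<Rightarrow> ('x \<Rightarrow> 'x \<Rightarrow> ('h, 'k::comm_ring_1) kmod)
    \<Rightarrow> ('x \<Rightarrow> 'x \<Rightarrow> 'x \<Rightarrow> 'h \<Rightarrow> 'h \<Rightarrow> 'h) \<Rightarrow> ('x \<Rightarrow> 'h)
    \<Rightarrow> ('x \<Rightarrow> 'x \<Rightarrow> 'h \<Rightarrow> ('h \<times> 'h \<Rightarrow> int) set) \<Rightarrow> ('x \<Rightarrow> 'x \<Rightarrow> 'h \<Rightarrow> 'k) \<Rightarrow> bool" where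
  "semi_hopf_cat X H mul one D e \<longleftrightarrow>
     klin_cat X H mul one \<and>
     (\<forall>x\<in>X. \<forall>y\<in>X. is_coalgebra (H x y) (D x y) (e x y)) \<and>
     (\<forall>x\<in>X. \<forall>y\<in>X. \<forall>z\<in>X. \<forall>h\<in>kcarrier (H x y). \<forall>h'\<in>kcarrier (H y z).
        D x z (mul x y z h h') =
          kprod (H x y) (H x y) (H y z) (H y z) (H x z) (H x z) (mul x y z) (mul x y z)
                (D x y h) (D y z h') \<and>
        e x z (mul x y z h h') = e x y h * e y z h') \<and>
     (\<forall>x\<in>X. D x x (one x) = ksimple (H x x) (H x x) (one x) (one x) \<and> e x x (one x) = 1)"

definition rcomod_cat :: "'x set \<Rightarrow> ('x \<Rightarrow> 'x \<Rightarrow> ('h, 'k::comm_ring_1) kmod)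
    \<Rightarrow> ('x \<Rightarrow> 'x \<Rightarrow> 'x \<Rightarrow> 'h \<Rightarrow> 'h \<Rightarrow> 'h) \<Rightarrow> ('x \<Rightarrow> 'h)
    \<Rightarrow> ('x \<Rightarrow> 'x \<Rightarrow> 'h \<Rightarrow> ('h \<times> 'h \<Rightarrow> int) set) \<Rightarrow> ('x \<Rightarrow> 'x \<Rightarrow> 'h \<Rightarrow> 'k)
    \<Rightarrow> ('x \<Rightarrow> 'x \<Rightarrow> ('a, 'k) kmod) \<Rightarrow> ('x \<Rightarrow> 'x \<Rightarrow> 'x \<Rightarrow> 'a \<Rightarrow> 'a \<Rightarrow> 'a) \<Rightarrow> ('x \<Rightarrow> 'a)
    \<Rightarrow> ('x \<Rightarrow> 'x \<Rightarrow> 'a \<Rightarrow> ('a \<times> 'h \<Rightarrow> int) set) \<Rightarrow> bool" where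
  "rcomod_cat X H hmul hone D e A mul one rho \<longleftrightarrow>
     klin_cat X A mul one \<and>
     (\<forall>x\<in>X. \<forall>y\<in>X. is_rcomodule (A x y) (H x y) (D x y) (e x y) (rho x y)) \<and>
     (\<forall>x\<in>X. \<forall>y\<in>X. \<forall>z\<in>X. \<forall>a\<in>kcarrier (A x y). \<forall>b\<in>kcarrier (A y z).
        rho x z (mul x y z a b) =
          kprod (A x y) (H x y) (A y z) (H y z) (A x z) (H x z) (mul x y z) (hmul x y z)
                (rho x y a) (rho y z b)) \<and>
     (\<forall>x\<in>X. rho x x (one x) = ksimple (A x x) (H x x) (one x) (hone x))"

definition coinv :: "('x \<Rightarrow> 'x \<Rightarrow> ('h, 'k::comm_ring_1) kmod) \<Rightarrow> ('x \<Rightarrow> 'h)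
    \<Rightarrow> ('x \<Rightarrow> 'x \<Rightarrow> ('a, 'k) kmod) \<Rightarrow> ('x \<Rightarrow> 'x \<Rightarrow> 'a \<Rightarrow> ('a \<times> 'h \<Rightarrow> int) set) \<Rightarrow> 'x \<Rightarrow> 'a set" where
  "coinv H hone A rho x =
     {a \<in> kcarrier (A x x). rho x x a = ksimple (A x x) (H x x) a (hone x)}"

definition bbal :: "('x \<Rightarrow> 'x \<Rightarrow> ('a, 'k) kmod) \<Rightarrow> ('x \<Rightarrow> 'x \<Rightarrow> 'x \<Rightarrow> 'a \<Rightarrow> 'a \<Rightarrow> 'a)
    \<Rightarrow> 'a set \<Rightarrow> 'x \<Rightarrow> 'x \<Rightarrow> 'x \<Rightarrow> (('a \<times> 'a) \<times> ('a \<times> 'a)) set" where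
  "bbal A mul B z x y =
     kbal (A z x) (A x y) \<union>
     {((mul z x x a b, a'), (a, mul x x y b a')) | a b a'.
        a \<in> kcarrier (A z x) \<and> b \<in> B \<and> a' \<in> kcarrier (A x y)}"

definition btens where
  "btens H hone A mul rho z x y =
     tensor (A z x) (A x y) (bbal A mul (coinv H hone A rho x) z x y)"

definition bsimple where
  "bsimple H hone A mul rho z x y =
     tsimple (A z x) (A x y) (bbal A mul (coinv H hone A rho x) z x y)"

definition can where
  "can H hone A mul rho z x y =
     tlift (A z x) (A x y) (bbal A mul (coinv H hone A rho x) z x y) (ktens (A z y) (H x y))
       (\<lambda>(a, a'). kmap (A x y) (H x y) (A z y) (H x y) (mul z x y a) id (rho x y a'))"

end

theory Submission
  imports Defs "HOL-Algebra.Group" "HOL-Algebra.FiniteProduct"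
begin


definition agrp :: "('a, 'k) kmod \<Rightarrow> 'a monoid" where
  "agrp T = \<lparr>carrier = kcarrier T, mult = kadd T, one = kzero T\<rparr>"

lemma agrp_simps[simp]: "carrier (agrp T) = kcarrier T" "mult (agrp T) = kadd T" "one (agrp T) = kzero T"
  by (simp_all add: agrp_def)

lemma is_kmod_parts:
  assumes "is_kmod M"
  shows "kzero M \<in> kcarrier M"
   "\<forall>x\<in>kcarrier M. \<forall>y\<in>kcarrier M. kadd M x y \<in> kcarrier M"
   "\<forall>c. \<forall>x\<in>kcarrier M. ksmult M c x \<in> kcarrier M"
   "\<forall>x\<in>kcarrier M. \<forall>y\<in>kcarrier M. \<forall>z\<in>kcarrier M.
        kadd M (kadd M x y) z = kadd M x (kadd M y z)"
   "\<forall>x\<in>kcarrier M. \<forall>y\<in>kcarrier M. kadd M x y = kadd M y x"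
   "\<forall>x\<in>kcarrier M. kadd M (kzero M) x = x"
   "\<forall>x\<in>kcarrier M. \<exists>y\<in>kcarrier M. kadd M x y = kzero M"
   "\<forall>c. \<forall>x\<in>kcarrier M. \<forall>y\<in>kcarrier M.
        ksmult M c (kadd M x y) = kadd M (ksmult M c x) (ksmult M c y)"
   "\<forall>c d. \<forall>x\<in>kcarrier M. ksmult M (c + d) x = kadd M (ksmult M c x) (ksmult M d x)"
   "\<forall>c d. \<forall>x\<in>kcarrier M. ksmult M (c * d) x = ksmult M c (ksmult M d x)"
   "\<forall>x\<in>kcarrier M. ksmult M 1 x = x"
  apply (insert assms[unfolded is_kmod_def])
  apply (elim conjE; assumption)+
  done

lemma is_kmod_comm_group:
  assumes "is_kmod (T::('a,'k::comm_ring_1) kmod)"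
  shows "comm_group (agrp T)"
proof (rule comm_groupI)
  note A = is_kmod_parts[OF assms]
  fix x y z
  assume x: "x \<in> carrier (agrp T)" and y: "y \<in> carrier (agrp T)" and z: "z \<in> carrier (agrp T)"
  show "x \<otimes>\<^bsub>agrp T\<^esub> y \<in> carrier (agrp T)" using A(2) x y by simp
  show "x \<otimes>\<^bsub>agrp T\<^esub> y \<otimes>\<^bsub>agrp T\<^esub> z = x \<otimes>\<^bsub>agrp T\<^esub> (y \<otimes>\<^bsub>agrp T\<^esub> z)" using A(4) x y z by simp
  show "x \<otimes>\<^bsub>agrp T\<^esub> y = y \<otimes>\<^bsub>agrp T\<^esub> x" using A(5) x y by simp
next
  note A = is_kmod_parts[OF assms]
  show "\<one>\<^bsub>agrp T\<^esub> \<in> carrier (agrp T)" using A(1) by simp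
  fix x assume x: "x \<in> carrier (agrp T)"
  show "\<one>\<^bsub>agrp T\<^esub> \<otimes>\<^bsub>agrp T\<^esub> x = x" using A(6) x by simp
  from A(7) x obtain y where y: "y \<in> kcarrier T" "kadd T x y = kzero T" by auto
  then have "kadd T y x = kzero T" using A(5) x by simp
  then show "\<exists>y\<in>carrier (agrp T). y \<otimes>\<^bsub>agrp T\<^esub> x = \<one>\<^bsub>agrp T\<^esub>" using y by auto
qed

locale kmodl =
  fixes T :: "('a, 'k::comm_ring_1) kmod"
  assumes kmod: "is_kmod T"
begin

sublocale G: comm_group "agrp T"
  by (rule is_kmod_comm_group[OF kmod])

lemma add_closed[simp,intro]: "x \<in> kcarrier T \<Longrightarrow> y \<in> kcarrier T \<Longrightarrow> kadd T x y \<in> kcarrier T"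
  using G.m_closed by simp
lemma zero_closed[simp,intro]: "kzero T \<in> kcarrier T"
  using is_kmod_parts[OF kmod] by blast
lemma smult_closed[simp,intro]: "x \<in> kcarrier T \<Longrightarrow> ksmult T c x \<in> kcarrier T"
  using is_kmod_parts[OF kmod] by blast
lemma smult_add: "x \<in> kcarrier T \<Longrightarrow> y \<in> kcarrier T \<Longrightarrow> ksmult T c (kadd T x y) = kadd T (ksmult T c x) (ksmult T c y)"
  using is_kmod_parts[OF kmod] by blast
lemma smult_add2: "x \<in> kcarrier T \<Longrightarrow> ksmult T (c + d) x = kadd T (ksmult T c x) (ksmult T d x)"
  using is_kmod_parts[OF kmod] by blast
lemma smult_smult: "x \<in> kcarrier T \<Longrightarrow> ksmult T c (ksmult T d x) = ksmult T (c * d) x"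
  using is_kmod_parts(10)[OF kmod] by simp
lemma smult_one[simp]: "x \<in> kcarrier T \<Longrightarrow> ksmult T 1 x = x"
  using is_kmod_parts(11)[OF kmod] by simp
lemma smult_comm: "x \<in> kcarrier T \<Longrightarrow> ksmult T c (ksmult T d x) = ksmult T d (ksmult T c x)"
  by (simp add: smult_smult mult.commute)

lemma l_zero[simp]: "x \<in> kcarrier T \<Longrightarrow> kadd T (kzero T) x = x"
  using G.l_one[of x] by simp
lemma r_zero[simp]: "x \<in> kcarrier T \<Longrightarrow> kadd T x (kzero T) = x"
  using G.r_one[of x] by simp
lemma inv_closed[simp,intro]: "x \<in> kcarrier T \<Longrightarrow> inv\<^bsub>agrp T\<^esub> x \<in> kcarrier T"
  using G.inv_closed[of x] by simp
lemma inv_zero[simp]: "inv\<^bsub>agrp T\<^esub> (kzero T) = kzero T"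
  using G.inv_one by simp
lemma r_inv[simp]: "x \<in> kcarrier T \<Longrightarrow> kadd T x (inv\<^bsub>agrp T\<^esub> x) = kzero T"
  using G.r_inv[of x] by simp
lemma l_inv[simp]: "x \<in> kcarrier T \<Longrightarrow> kadd T (inv\<^bsub>agrp T\<^esub> x) x = kzero T"
  using G.l_inv[of x] by simp
lemma add_assoc: "x \<in> kcarrier T \<Longrightarrow> y \<in> kcarrier T \<Longrightarrow> z \<in> kcarrier T \<Longrightarrow> kadd T (kadd T x y) z = kadd T x (kadd T y z)"
  using G.m_assoc[of x y z] by simp
lemma add_comm: "x \<in> kcarrier T \<Longrightarrow> y \<in> kcarrier T \<Longrightarrow> kadd T x y = kadd T y x"
  using G.m_comm[of x y] by simp
lemma add_lcomm: "x \<in> kcarrier T \<Longrightarrow> y \<in> kcarrier T \<Longrightarrow> z \<in> kcarrier T \<Longrightarrow> kadd T x (kadd T y z) = kadd T y (kadd T x z)"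
  using G.m_lcomm[of x y z] by simp
lemma inv_add: "x \<in> kcarrier T \<Longrightarrow> y \<in> kcarrier T \<Longrightarrow> inv\<^bsub>agrp T\<^esub> (kadd T x y) = kadd T (inv\<^bsub>agrp T\<^esub> x) (inv\<^bsub>agrp T\<^esub> y)"
  using G.inv_mult[of x y] G.m_comm by simp
lemma add_left_cancel: "x \<in> kcarrier T \<Longrightarrow> y \<in> kcarrier T \<Longrightarrow> z \<in> kcarrier T \<Longrightarrow> kadd T x y = kadd T x z \<longleftrightarrow> y = z"
  using G.Units_l_cancel[of x y z] G.Units_eq by simp
lemma add_eq_zero_inv: "x \<in> kcarrier T \<Longrightarrow> y \<in> kcarrier T \<Longrightarrow> kadd T x y = kzero T \<Longrightarrow> x = inv\<^bsub>agrp T\<^esub> y"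
  using G.inv_equality[of x y] by simp

lemma sum3_zero: "x \<in> kcarrier T \<Longrightarrow> y \<in> kcarrier T \<Longrightarrow>
   kadd T (kadd T (kadd T x y) (inv\<^bsub>agrp T\<^esub> x)) (inv\<^bsub>agrp T\<^esub> y) = kzero T"
proof -
  assume x: "x \<in> kcarrier T" and y: "y \<in> kcarrier T"
  have "kadd T (kadd T (kadd T x y) (inv\<^bsub>agrp T\<^esub> x)) (inv\<^bsub>agrp T\<^esub> y)
     = kadd T (kadd T x y) (kadd T (inv\<^bsub>agrp T\<^esub> x) (inv\<^bsub>agrp T\<^esub> y))"
    using x y by (simp add: add_assoc)
  also have "\<dots> = kadd T (kadd T x y) (inv\<^bsub>agrp T\<^esub> (kadd T x y))" using x y by (simp add: inv_add)
  also have "\<dots> = kzero T" using x y by simp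
  finally show ?thesis .
qed

lemma smult_zero[simp]: "ksmult T c (kzero T) = kzero T"
proof -
  have "ksmult T c (kzero T) = kadd T (ksmult T c (kzero T)) (ksmult T c (kzero T))"
    using smult_add[of "kzero T" "kzero T" c] G.l_one[of "kzero T"] by simp
  then show ?thesis using G.r_one G.l_cancel_one' smult_closed zero_closed
    by (metis agrp_simps)
qed

lemma smult_0[simp]: "x \<in> kcarrier T \<Longrightarrow> ksmult T 0 x = kzero T"
proof -
  assume x: "x \<in> kcarrier T"
  have "ksmult T 0 x = kadd T (ksmult T 0 x) (ksmult T 0 x)"
    using smult_add2[OF x, of 0 0] by simp
  then show ?thesis using G.l_cancel_one' smult_closed x
    by (metis agrp_simps)
qed

lemma smult_inv: "x \<in> kcarrier T \<Longrightarrow> ksmult T c (inv\<^bsub>agrp T\<^esub> x) = inv\<^bsub>agrp T\<^esub> (ksmult T c x)"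
proof -
  assume x: "x \<in> kcarrier T"
  have "kadd T (ksmult T c (inv\<^bsub>agrp T\<^esub> x)) (ksmult T c x) = kzero T"
    using smult_add[of "inv\<^bsub>agrp T\<^esub> x" x c] x G.l_inv[of x] G.inv_closed[of x] by simp
  then show ?thesis using x G.inv_equality[of "ksmult T c (inv\<^bsub>agrp T\<^esub> x)" "ksmult T c x"] G.inv_closed[of x]
    by simp
qed

lemma smult_neg: "x \<in> kcarrier T \<Longrightarrow> ksmult T (- c) x = inv\<^bsub>agrp T\<^esub> (ksmult T c x)"
proof -
  assume x: "x \<in> kcarrier T"
  have "kadd T (ksmult T (-c) x) (ksmult T c x) = kzero T"
    using smult_add2[OF x, of "-c" c] x by simp
  then show ?thesis using x G.inv_equality[of "ksmult T (-c) x" "ksmult T c x"]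
    by simp
qed

lemma smult_int: "x \<in> kcarrier T \<Longrightarrow> ksmult T (of_int n) x = x [^]\<^bsub>agrp T\<^esub> n"
proof (induction n rule: int_induct[where k=0])
  case base
  then show ?case by simp
next
  case (step1 i)
  then show ?case using smult_add2[of x "of_int i" 1] G.int_pow_mult[of x i 1]
    by simp
next
  case (step2 i)
  have "ksmult T (of_int (i - 1)) x = kadd T (ksmult T (of_int i) x) (ksmult T (-1) x)"
    using smult_add2[of x "of_int i" "-1"] step2 by simp
  then show ?case using step2 smult_neg[of x 1] G.int_pow_diff[of x i 1] G.int_pow_1
    by (simp add: G.int_pow_neg)
qed

lemma smult_finprod:
  "f \<in> A \<rightarrow> kcarrier T \<Longrightarrow> ksmult T c (finprod (agrp T) f A) = finprod (agrp T) (\<lambda>i. ksmult T c (f i)) A"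
proof (induction A rule: infinite_finite_induct)
  case (infinite A) then show ?case by simp
next
  case empty then show ?case by simp
next
  case (insert a A)
  have "(\<lambda>i. ksmult T c (f i)) \<in> A \<rightarrow> kcarrier T" using insert by auto
  then show ?case using insert
    using smult_add[of "f a" "finprod (agrp T) f A" c] G.finprod_closed[of f A]
    by (simp add: G.finprod_insert Pi_iff)
qed

lemma fold_graph_finprod:
  assumes "fold_graph (\<lambda>q acc. kadd T (g q) acc) (kzero T) S y" "g \<in> S \<rightarrow> kcarrier T"
  shows "y = finprod (agrp T) g S"
  using assms
proof (induction rule: fold_graph.induct)
  case emptyI then show ?case by simp
next
  case (insertI x A y)
  from insertI(2) have "finite A" by (induction rule: fold_graph.induct) auto
  with insertI show ?case by (simp add: Pi_iff)
qed

lemma ksum_eq: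
  assumes "finite S" "g \<in> S \<rightarrow> kcarrier T"
  shows "ksum T g S = finprod (agrp T) g S"
proof -
  obtain y where y: "fold_graph (\<lambda>q acc. kadd T (g q) acc) (kzero T) S y"
    using finite_imp_fold_graph[OF assms(1), of "\<lambda>q acc. kadd T (g q) acc" "kzero T"] by blast
  have "(THE y. fold_graph (\<lambda>q acc. kadd T (g q) acc) (kzero T) S y) = finprod (agrp T) g S"
    using y fold_graph_finprod[OF _ assms(2)] by (metis theI)
  then show ?thesis using assms(1) unfolding ksum_def Finite_Set.fold_def by simp
qed

end


definition supp :: "('p \<Rightarrow> int) \<Rightarrow> 'p set" where
  "supp f = {q. f q \<noteq> 0}"

lemma tfree_iff: "f \<in> tfree M N \<longleftrightarrow> finite (supp f) \<and> supp f \<subseteq> kcarrier M \<times> kcarrier N"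
  by (simp add: tfree_def supp_def)

lemma supp_add: "supp (\<lambda>q. f q + g q) \<subseteq> supp f \<union> supp g"
  by (auto simp: supp_def)
lemma supp_diff: "supp (\<lambda>q. f q - g q) \<subseteq> supp f \<union> supp g"
  by (auto simp: supp_def)
lemma supp_scale: "supp (\<lambda>q. n * f q) \<subseteq> supp f"
  by (auto simp: supp_def)
lemma supp_delta: "supp (delta p) = {p}"
  by (auto simp: supp_def delta_def)
lemma supp_zero: "supp (\<lambda>_. 0) = {}"
  by (auto simp: supp_def)

lemma tfree_zero[simp,intro]: "(\<lambda>_. 0) \<in> tfree M N"
  by (simp add: tfree_iff supp_zero)
lemma tfree_add[intro]: "f \<in> tfree M N \<Longrightarrow> g \<in> tfree M N \<Longrightarrow> (\<lambda>q. f q + g q) \<in> tfree M N"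
  unfolding tfree_iff using supp_add[of f g] by (meson finite_Un finite_subset le_sup_iff subset_trans)
lemma tfree_diff[intro]: "f \<in> tfree M N \<Longrightarrow> g \<in> tfree M N \<Longrightarrow> (\<lambda>q. f q - g q) \<in> tfree M N"
  unfolding tfree_iff using supp_diff[of f g] by (meson finite_Un finite_subset le_sup_iff subset_trans)
lemma tfree_scale[intro]: "f \<in> tfree M N \<Longrightarrow> (\<lambda>q. n * f q) \<in> tfree M N"
  unfolding tfree_iff using supp_scale[of n f] by (meson finite_subset subset_trans)
lemma tfree_delta[intro]: "p \<in> kcarrier M \<times> kcarrier N \<Longrightarrow> delta p \<in> tfree M N"
  unfolding tfree_iff supp_delta by simp

lemma zspan_add: "f \<in> zspan S \<Longrightarrow> g \<in> zspan S \<Longrightarrow> (\<lambda>q. f q + g q) \<in> zspan S"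
proof -
  assume f: "f \<in> zspan S" and g: "g \<in> zspan S"
  have "(\<lambda>q. (0::int) - g q) \<in> zspan S" using zspan_diff[OF zspan_zero g] .
  from zspan_diff[OF f this] show ?thesis by simp
qed
lemma zspan_neg: "g \<in> zspan S \<Longrightarrow> (\<lambda>q. - g q) \<in> zspan S"
  using zspan_diff[OF zspan_zero, of g S] by simp
lemma zspan_scale: "f \<in> zspan S \<Longrightarrow> (\<lambda>q. n * f q) \<in> zspan S"
proof (induction n rule: int_induct[where k=0])
  case base then show ?case using zspan_zero by simp
next
  case (step1 i)
  then have "(\<lambda>q. i * f q + f q) \<in> zspan S" using zspan_add by blast
  then show ?case by (simp add: algebra_simps)
next
  case (step2 i)
  then have "(\<lambda>q. i * f q - f q) \<in> zspan S" using zspan_diff by blast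
  then show ?case by (simp add: algebra_simps)
qed
lemma zspan_subset: "S \<subseteq> tfree M N \<Longrightarrow> zspan S \<subseteq> tfree M N"
proof
  fix f assume S: "S \<subseteq> tfree M N" and f: "f \<in> zspan S"
  from f S show "f \<in> tfree M N" by (induction rule: zspan.induct) auto
qed

lemma zspan_mono_map:
  assumes "\<And>s. s \<in> S \<Longrightarrow> F s \<in> zspan S'" "F (\<lambda>_. 0) \<in> zspan S'"
   "\<And>f g. f \<in> zspan S \<Longrightarrow> g \<in> zspan S \<Longrightarrow> F (\<lambda>q. f q - g q) = (\<lambda>q. F f q - F g q)"
   "f \<in> zspan S"
  shows "F f \<in> zspan S'"
  using assms(4)
proof (induction rule: zspan.induct)
  case zspan_zero then show ?case using assms(2) .
next
  case (zspan_gen s) then show ?case using assms(1) by blast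
next
  case (zspan_diff f g) then show ?case using assms(3) zspan.zspan_diff by metis
qed


lemma fpush_alt:
  assumes "finite S" "supp f \<subseteq> S"
  shows "fpush \<phi> f r = (\<Sum>q\<in>{q\<in>S. \<phi> q = r}. f q)"
  unfolding fpush_def
  by (rule sum.mono_neutral_left) (use assms in \<open>auto simp: supp_def\<close>)

lemma fpush_lin:
  assumes "finite (supp f)" "finite (supp g)"
  shows "fpush \<phi> (\<lambda>q. a * f q + b * g q) = (\<lambda>r. a * fpush \<phi> f r + b * fpush \<phi> g r)"
proof
  fix r
  let ?S = "supp f \<union> supp g"
  have S: "finite ?S" using assms by simp
  have "supp (\<lambda>q. a * f q + b * g q) \<subseteq> ?S" by (auto simp: supp_def)
  then show "fpush \<phi> (\<lambda>q. a * f q + b * g q) r = a * fpush \<phi> f r + b * fpush \<phi> g r"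
    using fpush_alt[OF S, of "\<lambda>q. a * f q + b * g q" \<phi> r] fpush_alt[OF S, of f \<phi> r] fpush_alt[OF S, of g \<phi> r]
    by (simp add: sum.distrib sum_distrib_left)
qed

lemma fpush_add: "finite (supp f) \<Longrightarrow> finite (supp g) \<Longrightarrow>
    fpush \<phi> (\<lambda>q. f q + g q) = (\<lambda>r. fpush \<phi> f r + fpush \<phi> g r)"
  using fpush_lin[of f g \<phi> 1 1] by simp
lemma fpush_diff: "finite (supp f) \<Longrightarrow> finite (supp g) \<Longrightarrow>
    fpush \<phi> (\<lambda>q. f q - g q) = (\<lambda>r. fpush \<phi> f r - fpush \<phi> g r)"
  using fpush_lin[of f g \<phi> 1 "-1"] by simp
lemma fpush_scale: "finite (supp f) \<Longrightarrow>
    fpush \<phi> (\<lambda>q. n * f q) = (\<lambda>r. n * fpush \<phi> f r)"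
  using fpush_lin[of f f \<phi> n 0] by simp
lemma fpush_delta: "fpush \<phi> (delta p) = delta (\<phi> p)"
proof
  fix r
  have "fpush \<phi> (delta p) r = (\<Sum>q\<in>{q\<in>{p}. \<phi> q = r}. delta p q)"
    by (rule fpush_alt) (auto simp: supp_delta)
  moreover have "{q\<in>{p}. \<phi> q = r} = (if \<phi> p = r then {p} else {})" by auto
  ultimately show "fpush \<phi> (delta p) r = delta (\<phi> p) r"
    by (simp add: delta_def)
qed
lemma fpush_zero: "fpush \<phi> (\<lambda>_. 0) = (\<lambda>_. 0)"
  by (simp add: fpush_def)
lemma supp_fpush: "supp (fpush \<phi> f) \<subseteq> \<phi> ` supp f"
proof
  fix r assume r: "r \<in> supp (fpush \<phi> f)"
  show "r \<in> \<phi> ` supp f"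
  proof (cases "{q. f q \<noteq> 0 \<and> \<phi> q = r} = {}")
    case True
    have "fpush \<phi> f r = (\<Sum>q\<in>{q. f q \<noteq> 0 \<and> \<phi> q = r}. f q)" by (simp add: fpush_def)
    also have "\<dots> = 0" unfolding True by simp
    finally have "fpush \<phi> f r = 0" .
    then show ?thesis using r by (simp add: supp_def)
  next
    case False
    then obtain q where "f q \<noteq> 0" "\<phi> q = r" by blast
    then show ?thesis by (auto simp: supp_def)
  qed
qed
lemma fpush_cong: "(\<And>q. q \<in> supp f \<Longrightarrow> \<phi> q = \<psi> q) \<Longrightarrow> fpush \<phi> f = fpush \<psi> f"
  unfolding fpush_def supp_def by (intro ext sum.cong) auto
lemma fpush_id: "finite (supp f) \<Longrightarrow> fpush (\<lambda>q. q) f = f"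
proof
  fix r assume "finite (supp f)"
  have "fpush (\<lambda>q. q) f r = (\<Sum>q\<in>{q\<in>insert r (supp f). q = r}. f q)"
    by (rule fpush_alt) (use \<open>finite (supp f)\<close> in auto)
  also have "{q\<in>insert r (supp f). q = r} = {r}" by auto
  finally show "fpush (\<lambda>q. q) f r = f r" by simp
qed
lemma fpush_comp:
  assumes "finite (supp f)"
  shows "fpush \<psi> (fpush \<phi> f) = fpush (\<lambda>q. \<psi> (\<phi> q)) f"
proof
  fix r
  let ?S = "supp f"
  have fin: "finite (\<phi> ` ?S)" using assms by simp
  have "fpush \<psi> (fpush \<phi> f) r = (\<Sum>r'\<in>{r'\<in>\<phi> ` ?S. \<psi> r' = r}. fpush \<phi> f r')"
    by (rule fpush_alt[OF fin supp_fpush])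
  also have "\<dots> = (\<Sum>r'\<in>{r'\<in>\<phi> ` ?S. \<psi> r' = r}. \<Sum>q\<in>{q\<in>{q\<in>?S. \<psi> (\<phi> q) = r}. \<phi> q = r'}. f q)"
  proof (rule sum.cong[OF refl])
    fix r' assume "r' \<in> {r'\<in>\<phi> ` ?S. \<psi> r' = r}"
    then have e: "{q\<in>{q\<in>?S. \<psi> (\<phi> q) = r}. \<phi> q = r'} = {q\<in>?S. \<phi> q = r'}" by auto
    show "fpush \<phi> f r' = (\<Sum>q\<in>{q\<in>{q\<in>?S. \<psi> (\<phi> q) = r}. \<phi> q = r'}. f q)"
      unfolding e by (rule fpush_alt[OF assms order_refl])
  qed
  also have "\<dots> = (\<Sum>q\<in>{q\<in>?S. \<psi> (\<phi> q) = r}. f q)"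
    by (rule sum.group) (use assms in \<open>auto\<close>)
  also have "\<dots> = fpush (\<lambda>q. \<psi> (\<phi> q)) f r"
    by (rule fpush_alt[symmetric, OF assms order_refl])
  finally show "fpush \<psi> (fpush \<phi> f) r = fpush (\<lambda>q. \<psi> (\<phi> q)) f r" .
qed

lemma tfree_fpush: "f \<in> tfree M N \<Longrightarrow> (\<And>q. q \<in> kcarrier M \<times> kcarrier N \<Longrightarrow> \<phi> q \<in> kcarrier M' \<times> kcarrier N') \<Longrightarrow>
   fpush \<phi> f \<in> tfree M' N'"
proof -
  assume f: "f \<in> tfree M N" and \<phi>: "\<And>q. q \<in> kcarrier M \<times> kcarrier N \<Longrightarrow> \<phi> q \<in> kcarrier M' \<times> kcarrier N'"
  have "finite (\<phi> ` supp f)" using f by (simp add: tfree_iff)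
  then have "finite (supp (fpush \<phi> f))" using supp_fpush[of \<phi> f] finite_subset by blast
  moreover have "\<phi> ` supp f \<subseteq> kcarrier M' \<times> kcarrier N'"
  proof
    fix r assume "r \<in> \<phi> ` supp f"
    then obtain q where q: "q \<in> supp f" "r = \<phi> q" by blast
    then have "q \<in> kcarrier M \<times> kcarrier N" using f by (auto simp: tfree_iff)
    then show "r \<in> kcarrier M' \<times> kcarrier N'" using q \<phi>[of q] by simp
  qed
  ultimately show ?thesis using supp_fpush[of \<phi> f] by (simp add: tfree_iff)
qed

lemma tfree_induct[consumes 1, case_names zero step]:
  assumes "f \<in> tfree M N" "P (\<lambda>_. 0)"
    "\<And>f p n. f \<in> tfree M N \<Longrightarrow> p \<in> kcarrier M \<times> kcarrier N \<Longrightarrow> f p = 0 \<Longrightarrow> P f \<Longrightarrow> P (\<lambda>q. f q + n * delta p q)"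
  shows "P f"
proof -
  have "\<forall>f. f \<in> tfree M N \<longrightarrow> card (supp f) = k \<longrightarrow> P f" for k
  proof (induction k)
    case 0
    show ?case
    proof (intro allI impI)
      fix f assume f: "f \<in> tfree M N" "card (supp f) = 0"
      then have "supp f = {}" by (simp add: tfree_iff)
      then have "f = (\<lambda>_. 0)" by (auto simp: supp_def)
      then show "P f" using assms(2) by simp
    qed
  next
    case (Suc k)
    show ?case
    proof (intro allI impI)
      fix f assume f: "f \<in> tfree M N" "card (supp f) = Suc k"
      then have "supp f \<noteq> {}" by auto
      then obtain p where p: "p \<in> supp f" by blast
      define f' where "f' = (\<lambda>q. if q = p then 0 else f q)"
      have sf': "supp f' = supp f - {p}" by (auto simp: supp_def f'_def)
      have f'T: "f' \<in> tfree M N" using f by (auto simp: tfree_iff sf')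
      have "card (supp f') = k" using f p by (simp add: sf' tfree_iff)
      then have "P f'" using Suc f'T by blast
      moreover have "p \<in> kcarrier M \<times> kcarrier N" using f p by (auto simp: tfree_iff)
      moreover have "f' p = 0" by (simp add: f'_def)
      ultimately have "P (\<lambda>q. f' q + f p * delta p q)" using assms(3) f'T by blast
      moreover have "(\<lambda>q. f' q + f p * delta p q) = f" by (auto simp: f'_def delta_def)
      ultimately show "P f" by simp
    qed
  qed
  then show ?thesis using assms(1) by blast
qed


locale tens = M: kmodl M + N: kmodl N
  for M :: "('a, 'k::comm_ring_1) kmod" and N :: "('b, 'k) kmod" +
  fixes Bal :: "(('a \<times> 'b) \<times> ('a \<times> 'b)) set"
  assumes Bal_carr: "Bal \<subseteq> (kcarrier M \<times> kcarrier N) \<times> (kcarrier M \<times> kcarrier N)"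
    and Bal_smult: "(p, p') \<in> Bal \<Longrightarrow>
        ((ksmult M c (fst p), snd p), (ksmult M c (fst p'), snd p')) \<in> Bal"
begin

abbreviation "TF \<equiv> tfree M N"
abbreviation "R \<equiv> zspan (trels M N Bal)"
abbreviation "cls \<equiv> tcls M N Bal"
abbreviation "Tn \<equiv> tensor M N Bal"
abbreviation "CP \<equiv> kcarrier M \<times> kcarrier N"

lemma trels_tfree: "trels M N Bal \<subseteq> TF"
  unfolding trels_def using Bal_carr by (auto intro!: tfree_diff tfree_delta)

lemma R_tfree: "f \<in> R \<Longrightarrow> f \<in> TF"
  using zspan_subset[OF trels_tfree] by blast

lemma rel1: "m \<in> kcarrier M \<Longrightarrow> m' \<in> kcarrier M \<Longrightarrow> n \<in> kcarrier N \<Longrightarrow>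
  (\<lambda>q. delta (kadd M m m', n) q - delta (m, n) q - delta (m', n) q) \<in> R"
  by (rule zspan_gen, unfold trels_def, rule UnI1, rule UnI1) blast
lemma rel2: "m \<in> kcarrier M \<Longrightarrow> n \<in> kcarrier N \<Longrightarrow> n' \<in> kcarrier N \<Longrightarrow>
  (\<lambda>q. delta (m, kadd N n n') q - delta (m, n) q - delta (m, n') q) \<in> R"
  by (rule zspan_gen, unfold trels_def, rule UnI1, rule UnI2) blast
lemma rel3: "(p, p') \<in> Bal \<Longrightarrow> (\<lambda>q. delta p q - delta p' q) \<in> R"
  by (rule zspan_gen, unfold trels_def, rule UnI2) blast

lemma cls_mem: "f \<in> TF \<Longrightarrow> f \<in> cls f"
  by (simp add: tcls_def zspan_zero)

lemma cls_eq_iff: "f \<in> TF \<Longrightarrow> g \<in> TF \<Longrightarrow> cls f = cls g \<longleftrightarrow> (\<lambda>q. f q - g q) \<in> R"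
proof
  assume "f \<in> TF" "g \<in> TF" "cls f = cls g"
  then show "(\<lambda>q. f q - g q) \<in> R" using cls_mem[of f] by (simp add: tcls_def)
next
  assume fg: "f \<in> TF" "g \<in> TF" "(\<lambda>q. f q - g q) \<in> R"
  show "cls f = cls g"
  proof (unfold tcls_def, intro Collect_cong conj_cong refl iffI)
    fix h assume "(\<lambda>q. h q - f q) \<in> R"
    from zspan_add[OF this fg(3)] show "(\<lambda>q. h q - g q) \<in> R" by simp
  next
    fix h assume "(\<lambda>q. h q - g q) \<in> R"
    from zspan_diff[OF this fg(3)] show "(\<lambda>q. h q - f q) \<in> R" by simp
  qed
qed

lemma cls_eqI: "f \<in> TF \<Longrightarrow> g \<in> TF \<Longrightarrow> (\<lambda>q. f q - g q) \<in> R \<Longrightarrow> cls f = cls g"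
  using cls_eq_iff by blast

lemma trep_cls: assumes "f \<in> TF" shows "trep (cls f) \<in> TF" "(\<lambda>q. trep (cls f) q - f q) \<in> R"
proof -
  have "trep (cls f) \<in> cls f" unfolding trep_def using cls_mem[OF assms] by (metis someI)
  then show "trep (cls f) \<in> TF" "(\<lambda>q. trep (cls f) q - f q) \<in> R" by (auto simp: tcls_def)
qed

lemma cls_trep: "f \<in> TF \<Longrightarrow> cls (trep (cls f)) = cls f"
  using trep_cls cls_eqI by blast

lemma carrier_Tn: "kcarrier Tn = cls ` TF"
  by (simp add: tensor_def)

lemma carrier_TnE: assumes "t \<in> kcarrier Tn" obtains f where "f \<in> TF" "t = cls f"
  using assms carrier_Tn by auto

lemma carrier_trep: "t \<in> kcarrier Tn \<Longrightarrow> trep t \<in> TF \<and> cls (trep t) = t"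
  by (metis carrier_TnE cls_trep trep_cls(1))

lemma cls_in[simp,intro]: "f \<in> TF \<Longrightarrow> cls f \<in> kcarrier Tn"
  by (simp add: carrier_Tn)

lemma Tn_add: "f \<in> TF \<Longrightarrow> g \<in> TF \<Longrightarrow> kadd Tn (cls f) (cls g) = cls (\<lambda>q. f q + g q)"
proof -
  assume f: "f \<in> TF" and g: "g \<in> TF"
  have "kadd Tn (cls f) (cls g) = cls (\<lambda>q. trep (cls f) q + trep (cls g) q)" by (simp add: tensor_def)
  also have "\<dots> = cls (\<lambda>q. f q + g q)"
  proof (rule cls_eqI)
    show "(\<lambda>q. trep (cls f) q + trep (cls g) q) \<in> TF" using trep_cls f g by blast
    show "(\<lambda>q. f q + g q) \<in> TF" using f g by blast
    have "(\<lambda>q. (trep (cls f) q - f q) + (trep (cls g) q - g q)) \<in> R"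
      using zspan_add trep_cls(2) f g by blast
    then show "(\<lambda>q. trep (cls f) q + trep (cls g) q - (f q + g q)) \<in> R" by (simp add: algebra_simps)
  qed
  finally show ?thesis .
qed

lemma Tn_zero: "kzero Tn = cls (\<lambda>_. 0)"
  by (simp add: tensor_def)

end


context tens
begin

definition phic :: "'k \<Rightarrow> 'a \<times> 'b \<Rightarrow> 'a \<times> 'b" where
  "phic c = (\<lambda>(m, n). (ksmult M c m, n))"

lemma phic_CP: "q \<in> CP \<Longrightarrow> phic c q \<in> CP"
  by (auto simp: phic_def)

lemma fpush_lin3: "fpush \<phi> (\<lambda>q. delta a q - delta b q - delta c q) = (\<lambda>q. delta (\<phi> a) q - delta (\<phi> b) q - delta (\<phi> c) q)"
proof -
  have "fpush \<phi> (\<lambda>q. delta a q - delta b q - delta c q) = (\<lambda>r. fpush \<phi> (\<lambda>q. delta a q - delta b q) r - fpush \<phi> (delta c) r)"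
    by (rule fpush_diff) (auto simp: supp_delta intro: finite_subset[OF supp_diff])
  then show ?thesis by (simp add: fpush_diff supp_delta fpush_delta)
qed

lemma phic_app[simp]: "phic c (m, n) = (ksmult M c m, n)"
  by (simp add: phic_def)

lemma fpush_R: assumes "f \<in> R" shows "fpush (phic c) f \<in> R"
proof (rule zspan_mono_map[OF _ _ _ assms])
  show "fpush (phic c) (\<lambda>_. 0) \<in> R" by (simp add: fpush_zero zspan_zero)
  fix f g assume "f \<in> R" "g \<in> R"
  then show "fpush (phic c) (\<lambda>q. f q - g q) = (\<lambda>q. fpush (phic c) f q - fpush (phic c) g q)"
    using R_tfree by (intro fpush_diff) (auto simp: tfree_iff)
next
  fix s assume "s \<in> trels M N Bal"
  from this[unfolded trels_def] show "fpush (phic c) s \<in> R"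
  proof (elim UnE)
    assume "s \<in> {(\<lambda>q. delta (kadd M m m', n) q - delta (m, n) q - delta (m', n) q) | m m' n.
        m \<in> kcarrier M \<and> m' \<in> kcarrier M \<and> n \<in> kcarrier N}"
    then obtain m m' n where a: "m \<in> kcarrier M" "m' \<in> kcarrier M" "n \<in> kcarrier N"
      "s = (\<lambda>q. delta (kadd M m m', n) q - delta (m, n) q - delta (m', n) q)" by blast
    have "fpush (phic c) s = (\<lambda>q. delta (phic c (kadd M m m', n)) q - delta (phic c (m, n)) q - delta (phic c (m', n)) q)"
      unfolding a(4) by (rule fpush_lin3)
    also have "\<dots> = (\<lambda>q. delta (kadd M (ksmult M c m) (ksmult M c m'), n) q - delta (ksmult M c m, n) q - delta (ksmult M c m', n) q)"
      using a by (simp add: M.smult_add)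
    finally show ?thesis using rel1 a by simp
  next
    assume "s \<in> {(\<lambda>q. delta (m, kadd N n n') q - delta (m, n) q - delta (m, n') q) | m n n'.
        m \<in> kcarrier M \<and> n \<in> kcarrier N \<and> n' \<in> kcarrier N}"
    then obtain m n n' where a: "m \<in> kcarrier M" "n \<in> kcarrier N" "n' \<in> kcarrier N"
      "s = (\<lambda>q. delta (m, kadd N n n') q - delta (m, n) q - delta (m, n') q)" by blast
    have "fpush (phic c) s = (\<lambda>q. delta (phic c (m, kadd N n n')) q - delta (phic c (m, n)) q - delta (phic c (m, n')) q)"
      unfolding a(4) by (rule fpush_lin3)
    also have "\<dots> = (\<lambda>q. delta (ksmult M c m, kadd N n n') q - delta (ksmult M c m, n) q - delta (ksmult M c m, n') q)"
      by simp
    finally show ?thesis using rel2 a by simp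
  next
    assume "s \<in> {(\<lambda>q. delta p q - delta p' q) | p p'. (p, p') \<in> Bal}"
    then obtain p p' where c: "(p, p') \<in> Bal" "s = (\<lambda>q. delta p q - delta p' q)" by blast
    have "fpush (phic c) s = (\<lambda>q. delta (phic c p) q - delta (phic c p') q)"
      unfolding c(2) by (simp add: fpush_diff supp_delta fpush_delta)
    moreover have "(phic c p, phic c p') \<in> Bal" using Bal_smult[OF c(1), of c]
      by (simp add: phic_def split_beta)
    ultimately show ?thesis using rel3 by simp
  qed
qed

lemma Tn_smult: assumes "f \<in> TF" shows "ksmult Tn c (cls f) = cls (fpush (phic c) f)"
proof -
  have "ksmult Tn c (cls f) = cls (fpush (phic c) (trep (cls f)))"
    by (simp add: tensor_def phic_def case_prod_beta)
  also have "\<dots> = cls (fpush (phic c) f)"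
  proof (rule cls_eqI)
    show "fpush (phic c) (trep (cls f)) \<in> TF" using trep_cls(1)[OF assms] by (rule tfree_fpush) (rule phic_CP)
    show "fpush (phic c) f \<in> TF" using assms by (rule tfree_fpush) (rule phic_CP)
    have "fpush (phic c) (\<lambda>q. trep (cls f) q - f q) \<in> R" using fpush_R trep_cls(2)[OF assms] by blast
    moreover have "fpush (phic c) (\<lambda>q. trep (cls f) q - f q) = (\<lambda>q. fpush (phic c) (trep (cls f)) q - fpush (phic c) f q)"
      using assms trep_cls(1)[OF assms] by (intro fpush_diff) (auto simp: tfree_iff)
    ultimately show "(\<lambda>q. fpush (phic c) (trep (cls f)) q - fpush (phic c) f q) \<in> R" by simp
  qed
  finally show ?thesis .
qed

lemma fpush_phic_TF: "f \<in> TF \<Longrightarrow> fpush (phic c) f \<in> TF"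
  by (rule tfree_fpush) (auto intro: phic_CP)

lemma smult_distrib_R:
  assumes "f \<in> TF"
  shows "(\<lambda>q. fpush (phic (c + d)) f q - (fpush (phic c) f q + fpush (phic d) f q)) \<in> R"
  using assms
proof (induction rule: tfree_induct)
  case zero then show ?case by (simp add: fpush_zero zspan_zero)
next
  case (step f p n)
  obtain m n' where p: "p = (m, n')" "m \<in> kcarrier M" "n' \<in> kcarrier N" using step(2) by auto
  have ff: "finite (supp f)" using step(1) by (simp add: tfree_iff)
  have fd: "finite (supp (\<lambda>q. n * delta p q))" using supp_scale[of n "delta p"] by (simp add: supp_delta finite_subset)
  have e: "fpush \<phi> (\<lambda>q. f q + n * delta p q) = (\<lambda>r. fpush \<phi> f r + n * delta (\<phi> p) r)" for \<phi>
    using fpush_add[OF ff fd, of \<phi>] fpush_scale[of "delta p" \<phi> n] by (simp add: supp_delta fpush_delta)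
  have r: "(\<lambda>q. n * (delta (kadd M (ksmult M c m) (ksmult M d m), n') q - delta (ksmult M c m, n') q - delta (ksmult M d m, n') q)) \<in> R"
    using zspan_scale[OF rel1] p by blast
  have "(\<lambda>q. (fpush (phic (c + d)) f q - (fpush (phic c) f q + fpush (phic d) f q)) +
     n * (delta (kadd M (ksmult M c m) (ksmult M d m), n') q - delta (ksmult M c m, n') q - delta (ksmult M d m, n') q)) \<in> R"
    using zspan_add[OF step(4) r] .
  moreover have "(\<lambda>q. fpush (phic (c + d)) (\<lambda>q. f q + n * delta p q) q - (fpush (phic c) (\<lambda>q. f q + n * delta p q) q + fpush (phic d) (\<lambda>q. f q + n * delta p q) q))
    = (\<lambda>q. (fpush (phic (c + d)) f q - (fpush (phic c) f q + fpush (phic d) f q)) +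
     n * (delta (kadd M (ksmult M c m) (ksmult M d m), n') q - delta (ksmult M c m, n') q - delta (ksmult M d m, n') q))"
    apply (rule ext)
    apply (simp only: e)
    apply (simp only: p(1) phic_app M.smult_add2[OF p(2)])
    apply (simp add: algebra_simps)
    done
  ultimately show ?case by simp
qed

lemma smult_assoc_eq:
  assumes "f \<in> TF"
  shows "fpush (phic (c * d)) f = fpush (phic c) (fpush (phic d) f)"
proof -
  have "fpush (phic c) (fpush (phic d) f) = fpush (\<lambda>q. phic c (phic d q)) f"
    using assms by (intro fpush_comp) (simp add: tfree_iff)
  also have "\<dots> = fpush (phic (c * d)) f"
    using assms by (intro fpush_cong) (auto simp: tfree_iff phic_def M.smult_smult)
  finally show ?thesis by simp
qed

lemma smult_one_eq:
  assumes "f \<in> TF"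
  shows "fpush (phic 1) f = f"
proof -
  have "fpush (phic 1) f = fpush (\<lambda>q. q) f"
    using assms by (intro fpush_cong) (auto simp: tfree_iff phic_def)
  then show ?thesis using fpush_id[of f] assms by (simp add: tfree_iff)
qed

end


context tens
begin

lemma Tn_kmod: "is_kmod Tn"
proof -
  have cl: "\<And>t. t \<in> kcarrier Tn \<Longrightarrow> \<exists>f\<in>TF. t = cls f" using carrier_TnE by metis
  have ffin: "\<And>f. f \<in> TF \<Longrightarrow> finite (supp f)" by (simp add: tfree_iff)
  show ?thesis
    unfolding is_kmod_def
  proof (intro conjI ballI allI)
    show "kzero Tn \<in> kcarrier Tn" by (simp add: Tn_zero)
  next
    fix x y assume "x \<in> kcarrier Tn" "y \<in> kcarrier Tn"
    then obtain f g where "f \<in> TF" "g \<in> TF" "x = cls f" "y = cls g" using cl by metis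
    then show "kadd Tn x y \<in> kcarrier Tn" "kadd Tn x y = kadd Tn y x"
      by (auto simp: Tn_add add.commute)
  next
    fix c x assume "x \<in> kcarrier Tn"
    then obtain f where "f \<in> TF" "x = cls f" using cl by metis
    then show "ksmult Tn c x \<in> kcarrier Tn" by (simp add: Tn_smult fpush_phic_TF)
  next
    fix x y z assume "x \<in> kcarrier Tn" "y \<in> kcarrier Tn" "z \<in> kcarrier Tn"
    then obtain f g h where "f \<in> TF" "g \<in> TF" "h \<in> TF" "x = cls f" "y = cls g" "z = cls h" using cl by metis
    then show "kadd Tn (kadd Tn x y) z = kadd Tn x (kadd Tn y z)"
      by (simp add: Tn_add tfree_add add.assoc)
  next
    fix x assume "x \<in> kcarrier Tn"
    then obtain f where f: "f \<in> TF" "x = cls f" using cl by metis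
    then show "kadd Tn (kzero Tn) x = x" by (simp add: Tn_zero Tn_add)
    have "(\<lambda>q. - f q) \<in> TF" using tfree_scale[OF f(1), of "-1"] by simp
    moreover have "kadd Tn x (cls (\<lambda>q. - f q)) = kzero Tn" using f calculation by (simp add: Tn_add Tn_zero)
    ultimately show "\<exists>y\<in>kcarrier Tn. kadd Tn x y = kzero Tn" by blast
    show "ksmult Tn 1 x = x" using f by (simp add: Tn_smult smult_one_eq)
  next
    fix c x y assume "x \<in> kcarrier Tn" "y \<in> kcarrier Tn"
    then obtain f g where fg: "f \<in> TF" "g \<in> TF" "x = cls f" "y = cls g" using cl by metis
    then show "ksmult Tn c (kadd Tn x y) = kadd Tn (ksmult Tn c x) (ksmult Tn c y)"
      by (simp add: Tn_add Tn_smult tfree_add fpush_phic_TF fpush_add ffin)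
  next
    fix c d x assume "x \<in> kcarrier Tn"
    then obtain f where f: "f \<in> TF" "x = cls f" using cl by metis
    show "ksmult Tn (c + d) x = kadd Tn (ksmult Tn c x) (ksmult Tn d x)"
      using f smult_distrib_R[OF f(1), of c d]
      by (simp add: Tn_add Tn_smult fpush_phic_TF cls_eq_iff tfree_add)
    show "ksmult Tn (c * d) x = ksmult Tn c (ksmult Tn d x)"
      using f by (simp add: Tn_smult fpush_phic_TF smult_assoc_eq)
  qed
qed

sublocale T: kmodl Tn
  by (unfold_locales) (rule Tn_kmod)

end


definition Lsum :: "('c, 'k::comm_ring_1) kmod \<Rightarrow> ('p \<Rightarrow> 'c) \<Rightarrow> ('p \<Rightarrow> int) \<Rightarrow> 'c" where
  "Lsum U \<beta> f = finprod (agrp U) (\<lambda>q. ksmult U (of_int (f q)) (\<beta> q)) (supp f)"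

definition bmap :: "('a, 'k) kmod \<Rightarrow> ('b, 'k) kmod \<Rightarrow> ('c, 'k) kmod \<Rightarrow> ('a \<times> 'b \<Rightarrow> 'c) \<Rightarrow> bool" where
  "bmap M N U \<beta> \<longleftrightarrow> (\<forall>m\<in>kcarrier M. \<forall>n\<in>kcarrier N. \<beta> (m, n) \<in> kcarrier U)"

definition bgood :: "('a, 'k) kmod \<Rightarrow> ('b, 'k) kmod \<Rightarrow> (('a \<times> 'b) \<times> ('a \<times> 'b)) set \<Rightarrow> ('c, 'k) kmod \<Rightarrow> ('a \<times> 'b \<Rightarrow> 'c) \<Rightarrow> bool" where
  "bgood M N Bal U \<beta> \<longleftrightarrow> bmap M N U \<beta> \<and>
     (\<forall>m\<in>kcarrier M. \<forall>m'\<in>kcarrier M. \<forall>n\<in>kcarrier N. \<beta> (kadd M m m', n) = kadd U (\<beta> (m, n)) (\<beta> (m', n))) \<and>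
     (\<forall>m\<in>kcarrier M. \<forall>n\<in>kcarrier N. \<forall>n'\<in>kcarrier N. \<beta> (m, kadd N n n') = kadd U (\<beta> (m, n)) (\<beta> (m, n'))) \<and>
     (\<forall>(p, p')\<in>Bal. \<beta> p = \<beta> p')"

definition bklin :: "('a, 'k::comm_ring_1) kmod \<Rightarrow> ('b, 'k) kmod \<Rightarrow> ('c, 'k) kmod \<Rightarrow> ('a \<times> 'b \<Rightarrow> 'c) \<Rightarrow> bool" where
  "bklin M N U \<beta> \<longleftrightarrow> (\<forall>c. \<forall>m\<in>kcarrier M. \<forall>n\<in>kcarrier N. \<beta> (ksmult M c m, n) = ksmult U c (\<beta> (m, n)))"

definition addmap :: "('a, 'k) kmod \<Rightarrow> ('c, 'k) kmod \<Rightarrow> ('a \<Rightarrow> 'c) \<Rightarrow> bool" where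
  "addmap A V F \<longleftrightarrow> (\<forall>x\<in>kcarrier A. F x \<in> kcarrier V) \<and>
     (\<forall>x\<in>kcarrier A. \<forall>y\<in>kcarrier A. F (kadd A x y) = kadd V (F x) (F y))"

lemma linmap_addmap: "linmap A V F \<Longrightarrow> addmap A V F"
  by (simp add: linmap_def addmap_def)

lemma bmapD: "bmap M N U \<beta> \<Longrightarrow> m \<in> kcarrier M \<Longrightarrow> n \<in> kcarrier N \<Longrightarrow> \<beta> (m, n) \<in> kcarrier U"
  by (simp add: bmap_def)
lemma bmapD': "bmap M N U \<beta> \<Longrightarrow> q \<in> kcarrier M \<times> kcarrier N \<Longrightarrow> \<beta> q \<in> kcarrier U"
  by (cases q) (simp add: bmap_def)

lemma bgood_bmap: "bgood M N Bal U \<beta> \<Longrightarrow> bmap M N U \<beta>"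
  by (simp add: bgood_def)

locale tlin = tens M N Bal + U: kmodl U
  for M :: "('a, 'k::comm_ring_1) kmod" and N :: "('b, 'k) kmod" and Bal
  and U :: "('c, 'k) kmod"
begin

lemma sm_Pi: "bmap M N U \<beta> \<Longrightarrow> S \<subseteq> CP \<Longrightarrow> (\<lambda>q. ksmult U (of_int (h q)) (\<beta> q)) \<in> S \<rightarrow> carrier (agrp U)"
proof
  fix q assume "bmap M N U \<beta>" "S \<subseteq> CP" "q \<in> S"
  then show "ksmult U (of_int (h q)) (\<beta> q) \<in> carrier (agrp U)" using bmapD'[of M N U \<beta> q] by auto
qed

lemma Lsum_superset:
  assumes b: "bmap M N U \<beta>" and f: "f \<in> TF" and S: "finite S" "supp f \<subseteq> S" "S \<subseteq> CP"
  shows "Lsum U \<beta> f = finprod (agrp U) (\<lambda>q. ksmult U (of_int (f q)) (\<beta> q)) S"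
  unfolding Lsum_def
proof (rule U.G.finprod_mono_neutral_cong_left[OF S(1) S(2)])
  show "\<And>i. i \<in> S - supp f \<Longrightarrow> ksmult U (of_int (f i)) (\<beta> i) = \<one>\<^bsub>agrp U\<^esub>"
    using S b by (auto simp: supp_def bmapD')
  show "(\<lambda>q. ksmult U (of_int (f q)) (\<beta> q)) \<in> S \<rightarrow> carrier (agrp U)"
    using S b by (auto simp: bmapD')
qed simp

lemma Lsum_closed: "bmap M N U \<beta> \<Longrightarrow> f \<in> TF \<Longrightarrow> Lsum U \<beta> f \<in> kcarrier U"
proof -
  assume b: "bmap M N U \<beta>" and f: "f \<in> TF"
  have "(\<lambda>q. ksmult U (of_int (f q)) (\<beta> q)) \<in> supp f \<rightarrow> carrier (agrp U)"
  proof
    fix q assume "q \<in> supp f"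
    then have "q \<in> CP" using f by (auto simp: tfree_iff)
    then show "ksmult U (of_int (f q)) (\<beta> q) \<in> carrier (agrp U)" using bmapD'[OF b] by simp
  qed
  then show ?thesis unfolding Lsum_def using U.G.finprod_closed by simp
qed

lemma Lsum_zero: "Lsum U \<beta> (\<lambda>_. 0) = kzero U"
  by (simp add: Lsum_def supp_zero)

lemma Lsum_add:
  assumes b: "bmap M N U \<beta>" and f: "f \<in> TF" and g: "g \<in> TF"
  shows "Lsum U \<beta> (\<lambda>q. f q + g q) = kadd U (Lsum U \<beta> f) (Lsum U \<beta> g)"
proof -
  let ?S = "supp f \<union> supp g"
  have S: "finite ?S" "?S \<subseteq> CP" using f g by (auto simp: tfree_iff)
  have "Lsum U \<beta> (\<lambda>q. f q + g q) = finprod (agrp U) (\<lambda>q. ksmult U (of_int (f q + g q)) (\<beta> q)) ?S"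
    by (rule Lsum_superset[OF b tfree_add[OF f g] S(1) supp_add S(2)])
  also have "\<dots> = finprod (agrp U) (\<lambda>q. kadd U (ksmult U (of_int (f q)) (\<beta> q)) (ksmult U (of_int (g q)) (\<beta> q))) ?S"
    using S b by (intro U.G.finprod_cong') (auto simp: bmapD' U.smult_add2 Pi_iff)
  also have "\<dots> = kadd U (finprod (agrp U) (\<lambda>q. ksmult U (of_int (f q)) (\<beta> q)) ?S) (finprod (agrp U) (\<lambda>q. ksmult U (of_int (g q)) (\<beta> q)) ?S)"
    using U.G.finprod_multf[OF sm_Pi[OF b S(2)] sm_Pi[OF b S(2)]] by simp
  also have "\<dots> = kadd U (Lsum U \<beta> f) (Lsum U \<beta> g)"
    using Lsum_superset[OF b f S(1) _ S(2)] Lsum_superset[OF b g S(1) _ S(2)] by simp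
  finally show ?thesis .
qed

lemma Lsum_neg:
  assumes b: "bmap M N U \<beta>" and f: "f \<in> TF"
  shows "Lsum U \<beta> (\<lambda>q. - f q) = inv\<^bsub>agrp U\<^esub> (Lsum U \<beta> f)"
proof -
  have f': "(\<lambda>q. - f q) \<in> TF" using tfree_scale[OF f, of "-1"] by simp
  have "Lsum U \<beta> (\<lambda>q. - f q + f q) = kadd U (Lsum U \<beta> (\<lambda>q. - f q)) (Lsum U \<beta> f)"
    using Lsum_add[OF b f' f] .
  moreover have "(\<lambda>q. - f q + f q) = (\<lambda>_. 0)" by simp
  ultimately have "kadd U (Lsum U \<beta> (\<lambda>q. - f q)) (Lsum U \<beta> f) = kzero U"
    using Lsum_zero by metis
  then show ?thesis
    using U.G.inv_equality[of "Lsum U \<beta> (\<lambda>q. - f q)" "Lsum U \<beta> f"] Lsum_closed[OF b f] Lsum_closed[OF b f'] by simp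
qed

lemma Lsum_diff:
  assumes b: "bmap M N U \<beta>" and f: "f \<in> TF" and g: "g \<in> TF"
  shows "Lsum U \<beta> (\<lambda>q. f q - g q) = kadd U (Lsum U \<beta> f) (inv\<^bsub>agrp U\<^esub> (Lsum U \<beta> g))"
proof -
  have g': "(\<lambda>q. - g q) \<in> TF" using tfree_scale[OF g, of "-1"] by simp
  have "Lsum U \<beta> (\<lambda>q. f q - g q) = Lsum U \<beta> (\<lambda>q. f q + (- g q))" by simp
  also have "\<dots> = kadd U (Lsum U \<beta> f) (Lsum U \<beta> (\<lambda>q. - g q))" by (rule Lsum_add[OF b f g'])
  finally show ?thesis using Lsum_neg[OF b g] by simp
qed

lemma Lsum_delta_scale:
  assumes b: "bmap M N U \<beta>" and p: "p \<in> CP"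
  shows "Lsum U \<beta> (\<lambda>q. n * delta p q) = ksmult U (of_int n) (\<beta> p)"
proof -
  have d: "(\<lambda>q. n * delta p q) \<in> TF" using tfree_scale[OF tfree_delta[OF p]] .
  have "Lsum U \<beta> (\<lambda>q. n * delta p q) = finprod (agrp U) (\<lambda>q. ksmult U (of_int (n * delta p q)) (\<beta> q)) {p}"
    by (rule Lsum_superset[OF b d]) (use p supp_scale[of n "delta p"] supp_delta[of p] in auto)
  also have "\<dots> = ksmult U (of_int n) (\<beta> p)"
    using p b by (simp add: delta_def bmapD')
  finally show ?thesis .
qed

lemma Lsum_delta: "bmap M N U \<beta> \<Longrightarrow> p \<in> CP \<Longrightarrow> Lsum U \<beta> (delta p) = \<beta> p"
  using Lsum_delta_scale[of \<beta> p 1] by (simp add: bmapD')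

lemma Lsum_R:
  assumes b: "bgood M N Bal U \<beta>" and f: "f \<in> R"
  shows "Lsum U \<beta> f = kzero U"
  using f
proof (induction rule: zspan.induct)
  case zspan_zero then show ?case by (rule Lsum_zero)
next
  case (zspan_diff f g)
  then show ?case using Lsum_diff[OF bgood_bmap[OF b] R_tfree R_tfree] by simp
next
  case (zspan_gen s)
  note bm = bgood_bmap[OF b]
  have d3: "Lsum U \<beta> (\<lambda>q. delta a q - delta a' q - delta a'' q) = kadd U (kadd U (\<beta> a) (inv\<^bsub>agrp U\<^esub> (\<beta> a'))) (inv\<^bsub>agrp U\<^esub> (\<beta> a''))"
    if "a \<in> CP" "a' \<in> CP" "a'' \<in> CP" for a a' a''
    using that by (simp add: Lsum_diff[OF bm] Lsum_delta[OF bm] tfree_diff tfree_delta)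
  from zspan_gen[unfolded trels_def] show ?case
  proof (elim UnE)
    assume "s \<in> {(\<lambda>q. delta (kadd M m m', n) q - delta (m, n) q - delta (m', n) q) | m m' n.
        m \<in> kcarrier M \<and> m' \<in> kcarrier M \<and> n \<in> kcarrier N}"
    then obtain m m' n where a: "m \<in> kcarrier M" "m' \<in> kcarrier M" "n \<in> kcarrier N"
      "s = (\<lambda>q. delta (kadd M m m', n) q - delta (m, n) q - delta (m', n) q)" by blast
    have e: "\<beta> (kadd M m m', n) = kadd U (\<beta> (m, n)) (\<beta> (m', n))" using b a by (simp add: bgood_def)
    have c: "\<beta> (m, n) \<in> kcarrier U" "\<beta> (m', n) \<in> kcarrier U" using a bm by (simp_all add: bmapD)
    show ?thesis using a d3[of "(kadd M m m', n)" "(m, n)" "(m', n)"] c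
      by (simp add: e U.sum3_zero)
  next
    assume "s \<in> {(\<lambda>q. delta (m, kadd N n n') q - delta (m, n) q - delta (m, n') q) | m n n'.
        m \<in> kcarrier M \<and> n \<in> kcarrier N \<and> n' \<in> kcarrier N}"
    then obtain m n n' where a: "m \<in> kcarrier M" "n \<in> kcarrier N" "n' \<in> kcarrier N"
      "s = (\<lambda>q. delta (m, kadd N n n') q - delta (m, n) q - delta (m, n') q)" by blast
    have e: "\<beta> (m, kadd N n n') = kadd U (\<beta> (m, n)) (\<beta> (m, n'))" using b a by (simp add: bgood_def)
    have c: "\<beta> (m, n) \<in> kcarrier U" "\<beta> (m, n') \<in> kcarrier U" using a bm by (simp_all add: bmapD)
    show ?thesis using a d3[of "(m, kadd N n n')" "(m, n)" "(m, n')"] c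
      by (simp add: e U.sum3_zero)
  next
    assume "s \<in> {(\<lambda>q. delta p q - delta p' q) | p p'. (p, p') \<in> Bal}"
    then obtain p p' where c: "(p, p') \<in> Bal" "s = (\<lambda>q. delta p q - delta p' q)" by blast
    have pp: "p \<in> CP" "p' \<in> CP" using c Bal_carr by auto
    have e: "\<beta> p = \<beta> p'" using b c by (auto simp: bgood_def)
    show ?thesis using c pp by (simp add: Lsum_diff[OF bm] Lsum_delta[OF bm] tfree_delta e bmapD'[OF bm])
  qed
qed

lemma tlift_Lsum:
  assumes b: "bmap M N U \<beta>" and t: "t \<in> kcarrier Tn"
  shows "tlift M N Bal U \<beta> t = Lsum U \<beta> (trep t)"
proof -
  have f: "trep t \<in> TF" using carrier_trep[OF t] by blast
  show ?thesis unfolding tlift_def Let_def Lsum_def supp_def[symmetric]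
    by (rule U.ksum_eq) (use f b in \<open>auto simp: tfree_iff bmapD'\<close>)
qed

lemma tlift_cls:
  assumes b: "bgood M N Bal U \<beta>" and f: "f \<in> TF"
  shows "tlift M N Bal U \<beta> (cls f) = Lsum U \<beta> f"
proof -
  note bm = bgood_bmap[OF b]
  have "tlift M N Bal U \<beta> (cls f) = Lsum U \<beta> (trep (cls f))" by (rule tlift_Lsum[OF bm cls_in[OF f]])
  also have "trep (cls f) = (\<lambda>q. f q + (trep (cls f) q - f q))" by simp
  also have "Lsum U \<beta> \<dots> = kadd U (Lsum U \<beta> f) (Lsum U \<beta> (\<lambda>q. trep (cls f) q - f q))"
    using Lsum_add[OF bm f] trep_cls[OF f] R_tfree by blast
  also have "\<dots> = Lsum U \<beta> f" using Lsum_R[OF b trep_cls(2)[OF f]] Lsum_closed[OF bm f] by simp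
  finally show ?thesis .
qed

lemma tlift_simple:
  assumes b: "bgood M N Bal U \<beta>" and m: "m \<in> kcarrier M" and n: "n \<in> kcarrier N"
  shows "tlift M N Bal U \<beta> (tsimple M N Bal m n) = \<beta> (m, n)"
  unfolding tsimple_def using tlift_cls[OF b tfree_delta] Lsum_delta[OF bgood_bmap[OF b]] m n by simp

lemma tlift_closed:
  assumes b: "bmap M N U \<beta>" and t: "t \<in> kcarrier Tn"
  shows "tlift M N Bal U \<beta> t \<in> kcarrier U"
  using tlift_Lsum[OF b t] Lsum_closed[OF b] carrier_trep[OF t] by simp

lemma tlift_add:
  assumes b: "bgood M N Bal U \<beta>" and t: "t \<in> kcarrier Tn" and s: "s \<in> kcarrier Tn"
  shows "tlift M N Bal U \<beta> (kadd Tn t s) = kadd U (tlift M N Bal U \<beta> t) (tlift M N Bal U \<beta> s)"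
proof -
  obtain f g where f: "f \<in> TF" "t = cls f" and g: "g \<in> TF" "s = cls g" using t s carrier_TnE by metis
  show ?thesis using f g by (simp add: Tn_add tlift_cls[OF b] Lsum_add[OF bgood_bmap[OF b]] tfree_add)
qed

lemma Lsum_fpush:
  assumes b: "bmap M N U \<beta>" and k: "bklin M N U \<beta>" and f: "f \<in> TF"
  shows "Lsum U \<beta> (fpush (phic c) f) = ksmult U c (Lsum U \<beta> f)"
  using f
proof (induction rule: tfree_induct)
  case zero then show ?case by (simp add: fpush_zero Lsum_zero)
next
  case (step f p n)
  obtain m n' where p: "p = (m, n')" "m \<in> kcarrier M" "n' \<in> kcarrier N" using step(2) by auto
  have ff: "finite (supp f)" using step(1) by (simp add: tfree_iff)
  have fd: "finite (supp (\<lambda>q. n * delta p q))" using supp_scale[of n "delta p"] by (simp add: supp_delta finite_subset)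
  have e: "fpush (phic c) (\<lambda>q. f q + n * delta p q) = (\<lambda>r. fpush (phic c) f r + n * delta (phic c p) r)"
    using fpush_add[OF ff fd, of "phic c"] fpush_scale[of "delta p" "phic c" n] by (simp add: supp_delta fpush_delta)
  have pc: "phic c p \<in> CP" using step(2) by (rule phic_CP)
  have t1: "fpush (phic c) f \<in> TF" by (rule fpush_phic_TF[OF step(1)])
  have t2: "(\<lambda>q. n * delta (phic c p) q) \<in> TF" using tfree_scale[OF tfree_delta[OF pc]] .
  have bp: "\<beta> p \<in> kcarrier U" using b step(2) by (rule bmapD')
  have "Lsum U \<beta> (fpush (phic c) (\<lambda>q. f q + n * delta p q))
      = kadd U (Lsum U \<beta> (fpush (phic c) f)) (ksmult U (of_int n) (\<beta> (phic c p)))"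
    unfolding e by (simp add: Lsum_add[OF b t1 t2] Lsum_delta_scale[OF b pc])
  also have "\<beta> (phic c p) = ksmult U c (\<beta> p)" using k p by (simp add: bklin_def)
  also have "kadd U (Lsum U \<beta> (fpush (phic c) f)) (ksmult U (of_int n) (ksmult U c (\<beta> p)))
     = ksmult U c (kadd U (Lsum U \<beta> f) (ksmult U (of_int n) (\<beta> p)))"
    using step(4) Lsum_closed[OF b step(1)] bp by (simp add: U.smult_add U.smult_comm)
  also have "kadd U (Lsum U \<beta> f) (ksmult U (of_int n) (\<beta> p)) = Lsum U \<beta> (\<lambda>q. f q + n * delta p q)"
    using Lsum_add[OF b step(1) tfree_scale[OF tfree_delta[OF step(2)]]] Lsum_delta_scale[OF b step(2)] by simp
  finally show ?case .
qed

lemma tlift_smult: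
  assumes b: "bgood M N Bal U \<beta>" and k: "bklin M N U \<beta>" and t: "t \<in> kcarrier Tn"
  shows "tlift M N Bal U \<beta> (ksmult Tn c t) = ksmult U c (tlift M N Bal U \<beta> t)"
proof -
  obtain f where f: "f \<in> TF" "t = cls f" using t carrier_TnE by metis
  show ?thesis using f by (simp add: Tn_smult tlift_cls[OF b] fpush_phic_TF Lsum_fpush[OF bgood_bmap[OF b] k])
qed

lemma tlift_linmap:
  assumes b: "bgood M N Bal U \<beta>" and k: "bklin M N U \<beta>"
  shows "linmap Tn U (tlift M N Bal U \<beta>)"
  unfolding linmap_def using tlift_closed[OF bgood_bmap[OF b]] tlift_add[OF b] tlift_smult[OF b k] by blast

lemma tlift_addmap:
  assumes b: "bgood M N Bal U \<beta>"
  shows "addmap Tn U (tlift M N Bal U \<beta>)"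
  unfolding addmap_def using tlift_closed[OF bgood_bmap[OF b]] tlift_add[OF b] by blast

lemma Lsum_cong:
  assumes "\<And>q. q \<in> CP \<Longrightarrow> \<beta> q = \<beta>' q" "f \<in> TF" "bmap M N U \<beta>'"
  shows "Lsum U \<beta> f = Lsum U \<beta>' f"
  unfolding Lsum_def using assms by (intro U.G.finprod_cong') (auto simp: tfree_iff bmapD' Pi_iff)

end


context tens
begin

lemma simple_in[simp,intro]: "m \<in> kcarrier M \<Longrightarrow> n \<in> kcarrier N \<Longrightarrow> tsimple M N Bal m n \<in> kcarrier Tn"
  unfolding tsimple_def by (rule cls_in) (simp add: tfree_delta)

lemma simple_add_l:
  assumes "m \<in> kcarrier M" "m' \<in> kcarrier M" "n \<in> kcarrier N"
  shows "tsimple M N Bal (kadd M m m') n = kadd Tn (tsimple M N Bal m n) (tsimple M N Bal m' n)"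
proof -
  have "kadd Tn (tsimple M N Bal m n) (tsimple M N Bal m' n) = cls (\<lambda>q. delta (m, n) q + delta (m', n) q)"
    unfolding tsimple_def using assms by (simp add: Tn_add tfree_delta)
  also have "\<dots> = cls (delta (kadd M m m', n))"
    using assms rel1[OF assms] by (intro cls_eqI) (auto intro!: tfree_add tfree_delta simp: algebra_simps zspan_neg
      dest: zspan_neg)
  finally show ?thesis by (simp add: tsimple_def)
qed

lemma simple_add_r:
  assumes "m \<in> kcarrier M" "n \<in> kcarrier N" "n' \<in> kcarrier N"
  shows "tsimple M N Bal m (kadd N n n') = kadd Tn (tsimple M N Bal m n) (tsimple M N Bal m n')"
proof -
  have "kadd Tn (tsimple M N Bal m n) (tsimple M N Bal m n') = cls (\<lambda>q. delta (m, n) q + delta (m, n') q)"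
    unfolding tsimple_def using assms by (simp add: Tn_add tfree_delta)
  also have "\<dots> = cls (delta (m, kadd N n n'))"
    using assms rel2[OF assms] by (intro cls_eqI) (auto intro!: tfree_add tfree_delta simp: algebra_simps zspan_neg
      dest: zspan_neg)
  finally show ?thesis by (simp add: tsimple_def)
qed

lemma simple_smult:
  assumes "m \<in> kcarrier M" "n \<in> kcarrier N"
  shows "ksmult Tn c (tsimple M N Bal m n) = tsimple M N Bal (ksmult M c m) n"
  unfolding tsimple_def using assms by (simp add: Tn_smult tfree_delta fpush_delta)

lemma simple_bal:
  assumes "(p, p') \<in> Bal"
  shows "tsimple M N Bal (fst p) (snd p) = tsimple M N Bal (fst p') (snd p')"
proof -
  have "p \<in> CP" "p' \<in> CP" using assms Bal_carr by auto
  then show ?thesis unfolding tsimple_def using rel3[OF assms] by (intro cls_eqI) (auto intro: tfree_delta)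
qed

lemma simple_kbal:
  assumes "kbal M N \<subseteq> Bal" "m \<in> kcarrier M" "n \<in> kcarrier N"
  shows "tsimple M N Bal (ksmult M c m) n = tsimple M N Bal m (ksmult N c n)"
proof -
  have "((ksmult M c m, n), (m, ksmult N c n)) \<in> Bal" using assms unfolding kbal_def by blast
  from simple_bal[OF this] show ?thesis by simp
qed

lemma simple_smult_r:
  assumes "kbal M N \<subseteq> Bal" "m \<in> kcarrier M" "n \<in> kcarrier N"
  shows "ksmult Tn c (tsimple M N Bal m n) = tsimple M N Bal m (ksmult N c n)"
  using simple_smult[OF assms(2,3)] simple_kbal[OF assms] by simp

lemma cls_scale_pow:
  assumes p: "p \<in> CP"
  shows "cls (\<lambda>q. n * delta p q) = cls (delta p) [^]\<^bsub>agrp Tn\<^esub> n"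
proof (induction n rule: int_induct[where k=0])
  case base
  then show ?case using Tn_zero by simp
next
  case (step1 i)
  have "cls (\<lambda>q. (i + 1) * delta p q) = cls (\<lambda>q. i * delta p q + delta p q)" by (simp add: algebra_simps)
  also have "\<dots> = kadd Tn (cls (\<lambda>q. i * delta p q)) (cls (delta p))"
    using p by (simp add: Tn_add tfree_delta tfree_scale)
  also have "\<dots> = cls (delta p) [^]\<^bsub>agrp Tn\<^esub> (i + 1)"
    using step1 p T.G.int_pow_mult[of "cls (delta p)" i 1] by (simp add: tfree_delta)
  finally show ?case .
next
  case (step2 i)
  have dp: "(\<lambda>q. - delta p q) \<in> TF" using tfree_scale[OF tfree_delta[OF p], of "-1"] by simp
  have inv: "cls (\<lambda>q. - delta p q) = inv\<^bsub>agrp Tn\<^esub> (cls (delta p))"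
  proof -
    have "kadd Tn (cls (\<lambda>q. - delta p q)) (cls (delta p)) = kzero Tn"
      using p dp by (simp add: Tn_add tfree_delta Tn_zero)
    then show ?thesis using T.add_eq_zero_inv dp p by (simp add: tfree_delta)
  qed
  have "cls (\<lambda>q. (i - 1) * delta p q) = cls (\<lambda>q. i * delta p q + - delta p q)" by (simp add: algebra_simps)
  also have "\<dots> = kadd Tn (cls (\<lambda>q. i * delta p q)) (cls (\<lambda>q. - delta p q))"
    using p dp by (simp add: Tn_add tfree_delta tfree_scale)
  also have "\<dots> = cls (delta p) [^]\<^bsub>agrp Tn\<^esub> (i - 1)"
    using step2 p T.G.int_pow_diff[of "cls (delta p)" i 1] inv by (simp add: tfree_delta)
  finally show ?case .
qed

end

lemma tlinI: "tens M N Bal \<Longrightarrow> is_kmod U \<Longrightarrow> tlin M N Bal U"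
  unfolding tlin_def kmodl_def by simp

lemma addmap_hom: "addmap A V F \<Longrightarrow> F \<in> hom (agrp A) (agrp V)"
  unfolding addmap_def by (intro homI) auto

context tlin
begin

lemma ext_rep:
  assumes F: "addmap Tn U F" and f: "f \<in> TF"
  shows "F (cls f) = Lsum U (\<lambda>q. F (cls (delta q))) f"
  using f
proof (induction rule: tfree_induct)
  case zero
  have "F (kzero Tn) = kzero U"
    using hom_one[OF addmap_hom[OF F] T.G.is_group U.G.is_group] by simp
  moreover have "Lsum U (\<lambda>q. F (cls (delta q))) (\<lambda>_. 0) = kzero U" by (rule Lsum_zero)
  ultimately show ?case using Tn_zero by simp
next
  case (step f p n)
  have bm: "bmap M N U (\<lambda>q. F (cls (delta q)))"
    using F unfolding bmap_def addmap_def by (auto intro: tfree_delta)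
  have dp: "cls (delta p) \<in> kcarrier Tn" using step(2) by (simp add: tfree_delta)
  have "F (cls (\<lambda>q. f q + n * delta p q)) = F (kadd Tn (cls f) (cls (\<lambda>q. n * delta p q)))"
    using step by (simp add: Tn_add tfree_scale tfree_delta)
  also have "\<dots> = kadd U (F (cls f)) (F (cls (\<lambda>q. n * delta p q)))"
    using F step by (simp add: addmap_def tfree_scale tfree_delta)
  finally have e1: "F (cls (\<lambda>q. f q + n * delta p q)) = kadd U (F (cls f)) (F (cls (\<lambda>q. n * delta p q)))" .
  have "F (cls (\<lambda>q. n * delta p q)) = F (cls (delta p)) [^]\<^bsub>agrp U\<^esub> n"
    using cls_scale_pow[OF step(2)] hom_int_pow[OF addmap_hom[OF F] _ T.G.is_group U.G.is_group] dp by simp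
  also have "\<dots> = ksmult U (of_int n) (F (cls (delta p)))"
    using U.smult_int F dp by (simp add: addmap_def)
  also have "\<dots> = Lsum U (\<lambda>q. F (cls (delta q))) (\<lambda>q. n * delta p q)"
    using Lsum_delta_scale[OF bm step(2)] by simp
  finally have e2: "F (cls (\<lambda>q. n * delta p q)) = Lsum U (\<lambda>q. F (cls (delta q))) (\<lambda>q. n * delta p q)" .
  show ?case using e1 e2 step(4) Lsum_add[OF bm step(1) tfree_scale[OF tfree_delta[OF step(2)]]] by simp
qed

lemma tensor_ext:
  assumes F: "addmap Tn U F" and G: "addmap Tn U G"
    and eq: "\<And>m n. m \<in> kcarrier M \<Longrightarrow> n \<in> kcarrier N \<Longrightarrow> F (tsimple M N Bal m n) = G (tsimple M N Bal m n)"
    and t: "t \<in> kcarrier Tn"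
  shows "F t = G t"
proof -
  obtain f where f: "f \<in> TF" "t = cls f" using t carrier_TnE by metis
  have bm: "bmap M N U (\<lambda>q. G (cls (delta q)))"
    using G unfolding bmap_def addmap_def by (auto intro: tfree_delta)
  have "F t = Lsum U (\<lambda>q. F (cls (delta q))) f" using ext_rep[OF F f(1)] f(2) by simp
  also have "\<dots> = Lsum U (\<lambda>q. G (cls (delta q))) f"
  proof (rule Lsum_cong[OF _ f(1) bm])
    fix q assume "q \<in> CP"
    then show "F (cls (delta q)) = G (cls (delta q))" using eq[of "fst q" "snd q"] by (cases q) (simp add: tsimple_def)
  qed
  also have "\<dots> = G t" using ext_rep[OF G f(1)] f(2) by simp
  finally show ?thesis .
qed

end


definition balmap :: "(('a \<times> 'b) \<times> ('a \<times> 'b)) set \<Rightarrow> (('c \<times> 'd) \<times> ('c \<times> 'd)) set \<Rightarrow> ('a \<Rightarrow> 'c) \<Rightarrow> ('b \<Rightarrow> 'd) \<Rightarrow> bool" where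
  "balmap Bal Bal' f g \<longleftrightarrow> (\<forall>p p'. (p, p') \<in> Bal \<longrightarrow> ((f (fst p), g (snd p)), (f (fst p'), g (snd p'))) \<in> Bal')"

definition tm_ok where
  "tm_ok M N Bal M' N' Bal' f g \<longleftrightarrow> tens M N Bal \<and> tens M' N' Bal' \<and> linmap M M' f \<and> linmap N N' g \<and> balmap Bal Bal' f g"

lemma linmapD: "linmap M N f \<Longrightarrow> x \<in> kcarrier M \<Longrightarrow> f x \<in> kcarrier N"
  "linmap M N f \<Longrightarrow> x \<in> kcarrier M \<Longrightarrow> y \<in> kcarrier M \<Longrightarrow> f (kadd M x y) = kadd N (f x) (f y)"
  "linmap M N f \<Longrightarrow> x \<in> kcarrier M \<Longrightarrow> f (ksmult M c x) = ksmult N c (f x)"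
  by (simp_all add: linmap_def)

lemma addmapD: "addmap M N f \<Longrightarrow> x \<in> kcarrier M \<Longrightarrow> f x \<in> kcarrier N"
  "addmap M N f \<Longrightarrow> x \<in> kcarrier M \<Longrightarrow> y \<in> kcarrier M \<Longrightarrow> f (kadd M x y) = kadd N (f x) (f y)"
  by (simp_all add: addmap_def)

lemma tens_kmod1: "tens M N Bal \<Longrightarrow> is_kmod M" by (simp add: tens_def kmodl_def)
lemma tens_kmod2: "tens M N Bal \<Longrightarrow> is_kmod N" by (simp add: tens_def kmodl_def)
lemma tens_kmodT: "tens M N Bal \<Longrightarrow> is_kmod (tensor M N Bal)" by (rule tens.Tn_kmod)

lemma tm_ok_bgood:
  assumes "tm_ok M N Bal M' N' Bal' f g"
  shows "bgood M N Bal (tensor M' N' Bal') (\<lambda>(m, n). tsimple M' N' Bal' (f m) (g n))"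
    "bklin M N (tensor M' N' Bal') (\<lambda>(m, n). tsimple M' N' Bal' (f m) (g n))"
proof -
  interpret S: tens M N Bal using assms by (simp add: tm_ok_def)
  interpret S': tens M' N' Bal' using assms by (simp add: tm_ok_def)
  have f: "linmap M M' f" and g: "linmap N N' g" and b: "balmap Bal Bal' f g" using assms by (simp_all add: tm_ok_def)
  show "bgood M N Bal (tensor M' N' Bal') (\<lambda>(m, n). tsimple M' N' Bal' (f m) (g n))"
    unfolding bgood_def bmap_def
    apply (intro conjI)
    subgoal using f g by (simp add: linmapD)
    subgoal using f g by (simp add: linmapD S'.simple_add_l)
    subgoal using f g by (simp add: linmapD S'.simple_add_r)
    apply clarify
    subgoal for a b a' b'
      using b S'.simple_bal[of "(f a, g b)" "(f a', g b')"] unfolding balmap_def by force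
    done
  show "bklin M N (tensor M' N' Bal') (\<lambda>(m, n). tsimple M' N' Bal' (f m) (g n))"
    unfolding bklin_def using f g by (simp add: linmapD S'.simple_smult)
qed

lemma tm_ok_tlin: "tm_ok M N Bal M' N' Bal' f g \<Longrightarrow> tlin M N Bal (tensor M' N' Bal')"
  unfolding tm_ok_def by (metis tlinI tens_kmodT)

lemma tmap_simple:
  assumes "tm_ok M N Bal M' N' Bal' f g" "m \<in> kcarrier M" "n \<in> kcarrier N"
  shows "tmap M N Bal M' N' Bal' f g (tsimple M N Bal m n) = tsimple M' N' Bal' (f m) (g n)"
  unfolding tmap_def using tlin.tlift_simple[OF tm_ok_tlin[OF assms(1)] tm_ok_bgood(1)[OF assms(1)] assms(2,3)] by simp

lemma tmap_linmap:
  assumes "tm_ok M N Bal M' N' Bal' f g"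
  shows "linmap (tensor M N Bal) (tensor M' N' Bal') (tmap M N Bal M' N' Bal' f g)"
  unfolding tmap_def by (rule tlin.tlift_linmap[OF tm_ok_tlin[OF assms] tm_ok_bgood[OF assms]])

lemma tmap_addmap:
  assumes "tm_ok M N Bal M' N' Bal' f g"
  shows "addmap (tensor M N Bal) (tensor M' N' Bal') (tmap M N Bal M' N' Bal' f g)"
  by (rule linmap_addmap[OF tmap_linmap[OF assms]])

lemma tmap_closed:
  assumes "tm_ok M N Bal M' N' Bal' f g" "t \<in> kcarrier (tensor M N Bal)"
  shows "tmap M N Bal M' N' Bal' f g t \<in> kcarrier (tensor M' N' Bal')"
  using tmap_linmap[OF assms(1)] assms(2) by (simp add: linmapD)

lemma (in kmodl) add_add_swap:
  "a \<in> kcarrier T \<Longrightarrow> b \<in> kcarrier T \<Longrightarrow> c \<in> kcarrier T \<Longrightarrow> d \<in> kcarrier T \<Longrightarrow>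
   kadd T (kadd T a b) (kadd T c d) = kadd T (kadd T a c) (kadd T b d)"
  by (simp add: add_assoc add_lcomm[of b c d])

lemma addmap_add:
  assumes "is_kmod V" "addmap A V F" "addmap A V G"
  shows "addmap A V (\<lambda>t. kadd V (F t) (G t))"
proof -
  interpret V: kmodl V by (unfold_locales) (rule assms(1))
  show ?thesis using assms(2,3) unfolding addmap_def by (auto simp: V.add_add_swap)
qed

lemma addmap_smult:
  assumes "is_kmod V" "addmap A V F"
  shows "addmap A V (\<lambda>t. ksmult V c (F t))"
proof -
  interpret V: kmodl V by (unfold_locales) (rule assms(1))
  show ?thesis using assms(2) unfolding addmap_def by (auto simp: V.smult_add)
qed

lemma addmap_comp:
  "addmap A B F \<Longrightarrow> addmap B C G \<Longrightarrow> addmap A C (\<lambda>t. G (F t))"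
  unfolding addmap_def by auto

lemma addmap_id: "addmap A A (\<lambda>t. t)"
  unfolding addmap_def by auto

lemma tmap_add_fun:
  assumes ok: "tm_ok M N Bal M' N' Bal' f g" "tm_ok M N Bal M' N' Bal' f1 g" "tm_ok M N Bal M' N' Bal' f2 g"
    and e: "\<And>m. m \<in> kcarrier M \<Longrightarrow> f m = kadd M' (f1 m) (f2 m)"
    and t: "t \<in> kcarrier (tensor M N Bal)"
  shows "tmap M N Bal M' N' Bal' f g t = kadd (tensor M' N' Bal') (tmap M N Bal M' N' Bal' f1 g t) (tmap M N Bal M' N' Bal' f2 g t)"
proof -
  interpret L: tlin M N Bal "tensor M' N' Bal'" by (rule tm_ok_tlin[OF ok(1)])
  interpret S': tens M' N' Bal' using ok(1) by (simp add: tm_ok_def)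
  have f1: "linmap M M' f1" and f2: "linmap M M' f2" and g: "linmap N N' g" using ok by (simp_all add: tm_ok_def)
  show ?thesis
  proof (rule L.tensor_ext[OF tmap_addmap[OF ok(1)] addmap_add[OF L.U.kmod tmap_addmap[OF ok(2)] tmap_addmap[OF ok(3)]] _ t])
    fix m n assume "m \<in> kcarrier M" "n \<in> kcarrier N"
    then show "tmap M N Bal M' N' Bal' f g (tsimple M N Bal m n) =
      kadd (tensor M' N' Bal') (tmap M N Bal M' N' Bal' f1 g (tsimple M N Bal m n)) (tmap M N Bal M' N' Bal' f2 g (tsimple M N Bal m n))"
      using f1 f2 g by (simp add: tmap_simple[OF ok(1)] tmap_simple[OF ok(2)] tmap_simple[OF ok(3)] e linmapD S'.simple_add_l)
  qed
qed

lemma tmap_add_fun_r: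
  assumes ok: "tm_ok M N Bal M' N' Bal' f g" "tm_ok M N Bal M' N' Bal' f g1" "tm_ok M N Bal M' N' Bal' f g2"
    and e: "\<And>n. n \<in> kcarrier N \<Longrightarrow> g n = kadd N' (g1 n) (g2 n)"
    and t: "t \<in> kcarrier (tensor M N Bal)"
  shows "tmap M N Bal M' N' Bal' f g t = kadd (tensor M' N' Bal') (tmap M N Bal M' N' Bal' f g1 t) (tmap M N Bal M' N' Bal' f g2 t)"
proof -
  interpret L: tlin M N Bal "tensor M' N' Bal'" by (rule tm_ok_tlin[OF ok(1)])
  interpret S': tens M' N' Bal' using ok(1) by (simp add: tm_ok_def)
  have f: "linmap M M' f" and g1: "linmap N N' g1" and g2: "linmap N N' g2" using ok by (simp_all add: tm_ok_def)
  show ?thesis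
  proof (rule L.tensor_ext[OF tmap_addmap[OF ok(1)] addmap_add[OF L.U.kmod tmap_addmap[OF ok(2)] tmap_addmap[OF ok(3)]] _ t])
    fix m n assume "m \<in> kcarrier M" "n \<in> kcarrier N"
    then show "tmap M N Bal M' N' Bal' f g (tsimple M N Bal m n) =
      kadd (tensor M' N' Bal') (tmap M N Bal M' N' Bal' f g1 (tsimple M N Bal m n)) (tmap M N Bal M' N' Bal' f g2 (tsimple M N Bal m n))"
      using f g1 g2 by (simp add: tmap_simple[OF ok(1)] tmap_simple[OF ok(2)] tmap_simple[OF ok(3)] e linmapD S'.simple_add_r)
  qed
qed

lemma tmap_smult_fun:
  assumes ok: "tm_ok M N Bal M' N' Bal' f g" "tm_ok M N Bal M' N' Bal' f1 g"
    and e: "\<And>m. m \<in> kcarrier M \<Longrightarrow> f m = ksmult M' c (f1 m)"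
    and t: "t \<in> kcarrier (tensor M N Bal)"
  shows "tmap M N Bal M' N' Bal' f g t = ksmult (tensor M' N' Bal') c (tmap M N Bal M' N' Bal' f1 g t)"
proof -
  interpret L: tlin M N Bal "tensor M' N' Bal'" by (rule tm_ok_tlin[OF ok(1)])
  interpret S': tens M' N' Bal' using ok(1) by (simp add: tm_ok_def)
  have f1: "linmap M M' f1" and g: "linmap N N' g" using ok by (simp_all add: tm_ok_def)
  show ?thesis
  proof (rule L.tensor_ext[OF tmap_addmap[OF ok(1)] addmap_smult[OF L.U.kmod tmap_addmap[OF ok(2)]] _ t])
    fix m n assume "m \<in> kcarrier M" "n \<in> kcarrier N"
    then show "tmap M N Bal M' N' Bal' f g (tsimple M N Bal m n) =
      ksmult (tensor M' N' Bal') c (tmap M N Bal M' N' Bal' f1 g (tsimple M N Bal m n))"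
      using f1 g by (simp add: tmap_simple[OF ok(1)] tmap_simple[OF ok(2)] e linmapD S'.simple_smult)
  qed
qed

lemma tmap_smult_fun_r:
  assumes ok: "tm_ok M N Bal M' N' Bal' f g" "tm_ok M N Bal M' N' Bal' f g1"
    and kb: "kbal M' N' \<subseteq> Bal'"
    and e: "\<And>n. n \<in> kcarrier N \<Longrightarrow> g n = ksmult N' c (g1 n)"
    and t: "t \<in> kcarrier (tensor M N Bal)"
  shows "tmap M N Bal M' N' Bal' f g t = ksmult (tensor M' N' Bal') c (tmap M N Bal M' N' Bal' f g1 t)"
proof -
  interpret L: tlin M N Bal "tensor M' N' Bal'" by (rule tm_ok_tlin[OF ok(1)])
  interpret S': tens M' N' Bal' using ok(1) by (simp add: tm_ok_def)
  have f: "linmap M M' f" and g1: "linmap N N' g1" using ok by (simp_all add: tm_ok_def)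
  show ?thesis
  proof (rule L.tensor_ext[OF tmap_addmap[OF ok(1)] addmap_smult[OF L.U.kmod tmap_addmap[OF ok(2)]] _ t])
    fix m n assume "m \<in> kcarrier M" "n \<in> kcarrier N"
    then show "tmap M N Bal M' N' Bal' f g (tsimple M N Bal m n) =
      ksmult (tensor M' N' Bal') c (tmap M N Bal M' N' Bal' f g1 (tsimple M N Bal m n))"
      using f g1 by (simp add: tmap_simple[OF ok(1)] tmap_simple[OF ok(2)] e linmapD S'.simple_smult_r[OF kb])
  qed
qed

lemma tmap_cong:
  assumes ok: "tm_ok M N Bal M' N' Bal' f g" "tm_ok M N Bal M' N' Bal' f' g'"
    and e: "\<And>m. m \<in> kcarrier M \<Longrightarrow> f m = f' m" "\<And>n. n \<in> kcarrier N \<Longrightarrow> g n = g' n"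
    and t: "t \<in> kcarrier (tensor M N Bal)"
  shows "tmap M N Bal M' N' Bal' f g t = tmap M N Bal M' N' Bal' f' g' t"
proof -
  interpret L: tlin M N Bal "tensor M' N' Bal'" by (rule tm_ok_tlin[OF ok(1)])
  show ?thesis
    by (rule L.tensor_ext[OF tmap_addmap[OF ok(1)] tmap_addmap[OF ok(2)] _ t])
      (simp add: tmap_simple[OF ok(1)] tmap_simple[OF ok(2)] e)
qed

lemma tmap_comp:
  assumes ok: "tm_ok M N Bal M' N' Bal' f g" "tm_ok M' N' Bal' M'' N'' Bal'' f' g'" "tm_ok M N Bal M'' N'' Bal'' h k"
    and e: "\<And>m. m \<in> kcarrier M \<Longrightarrow> h m = f' (f m)" "\<And>n. n \<in> kcarrier N \<Longrightarrow> k n = g' (g n)"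
    and t: "t \<in> kcarrier (tensor M N Bal)"
  shows "tmap M' N' Bal' M'' N'' Bal'' f' g' (tmap M N Bal M' N' Bal' f g t) = tmap M N Bal M'' N'' Bal'' h k t"
proof -
  interpret L: tlin M N Bal "tensor M'' N'' Bal''" by (rule tm_ok_tlin[OF ok(3)])
  have f: "linmap M M' f" and g: "linmap N N' g" using ok by (simp_all add: tm_ok_def)
  show ?thesis
  proof (rule L.tensor_ext[OF addmap_comp[OF tmap_addmap[OF ok(1)] tmap_addmap[OF ok(2)]] tmap_addmap[OF ok(3)] _ t])
    fix m n assume "m \<in> kcarrier M" "n \<in> kcarrier N"
    then show "tmap M' N' Bal' M'' N'' Bal'' f' g' (tmap M N Bal M' N' Bal' f g (tsimple M N Bal m n)) =
      tmap M N Bal M'' N'' Bal'' h k (tsimple M N Bal m n)"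
      using f g by (simp add: tmap_simple[OF ok(1)] tmap_simple[OF ok(2)] tmap_simple[OF ok(3)] e linmapD)
  qed
qed

lemma tmap_id:
  assumes ok: "tm_ok M N Bal M N Bal f g"
    and e: "\<And>m. m \<in> kcarrier M \<Longrightarrow> f m = m" "\<And>n. n \<in> kcarrier N \<Longrightarrow> g n = n"
    and t: "t \<in> kcarrier (tensor M N Bal)"
  shows "tmap M N Bal M N Bal f g t = t"
proof -
  interpret L: tlin M N Bal "tensor M N Bal" by (rule tm_ok_tlin[OF ok(1)])
  show ?thesis
    by (rule L.tensor_ext[OF tmap_addmap[OF ok(1)] addmap_id _ t])
      (simp add: tmap_simple[OF ok(1)] e)
qed

lemma tens_kbal:
  assumes "is_kmod M" "is_kmod N"
  shows "tens M N (kbal M N)"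
proof -
  interpret M: kmodl M by unfold_locales (rule assms(1))
  interpret N: kmodl N by unfold_locales (rule assms(2))
  show ?thesis
  proof (unfold_locales)
    show "kbal M N \<subseteq> (kcarrier M \<times> kcarrier N) \<times> kcarrier M \<times> kcarrier N" by (auto simp: kbal_def)
  next
    fix p p' c assume "(p, p') \<in> kbal M N"
    then obtain d m n where "p = (ksmult M d m, n)" "p' = (m, ksmult N d n)" "m \<in> kcarrier M" "n \<in> kcarrier N"
      by (auto simp: kbal_def)
    moreover have "ksmult M c (ksmult M d m) = ksmult M d (ksmult M c m)" using calculation by (simp add: M.smult_comm)
    ultimately show "((ksmult M c (fst p), snd p), ksmult M c (fst p'), snd p') \<in> kbal M N"
      unfolding kbal_def by auto
  qed
qed

lemma balmap_kbal:
  assumes "linmap M M' f" "linmap N N' g"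
  shows "balmap (kbal M N) (kbal M' N') f g"
  unfolding balmap_def kbal_def using assms by (auto simp: linmapD)

lemma tm_ok_kbal:
  assumes "is_kmod M" "is_kmod N" "is_kmod M'" "is_kmod N'" "linmap M M' f" "linmap N N' g"
  shows "tm_ok M N (kbal M N) M' N' (kbal M' N') f g"
  unfolding tm_ok_def using assms by (simp add: tens_kbal balmap_kbal)

lemma linmap_id: "linmap M M (\<lambda>x. x)"
  by (simp add: linmap_def)


lemma klin_cat_parts:
  assumes "klin_cat X M mul onef"
  shows "\<forall>x\<in>X. \<forall>y\<in>X. is_kmod (M x y)"
   "\<forall>x\<in>X. \<forall>y\<in>X. \<forall>z\<in>X. \<forall>a\<in>kcarrier (M x y). \<forall>b\<in>kcarrier (M y z).
        mul x y z a b \<in> kcarrier (M x z)"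
   "\<forall>x\<in>X. \<forall>y\<in>X. \<forall>z\<in>X. \<forall>a\<in>kcarrier (M x y). \<forall>a'\<in>kcarrier (M x y). \<forall>b\<in>kcarrier (M y z).
        mul x y z (kadd (M x y) a a') b = kadd (M x z) (mul x y z a b) (mul x y z a' b)"
   "\<forall>x\<in>X. \<forall>y\<in>X. \<forall>z\<in>X. \<forall>a\<in>kcarrier (M x y). \<forall>b\<in>kcarrier (M y z). \<forall>b'\<in>kcarrier (M y z).
        mul x y z a (kadd (M y z) b b') = kadd (M x z) (mul x y z a b) (mul x y z a b')"
   "\<forall>x\<in>X. \<forall>y\<in>X. \<forall>z\<in>X. \<forall>c. \<forall>a\<in>kcarrier (M x y). \<forall>b\<in>kcarrier (M y z).
        mul x y z (ksmult (M x y) c a) b = ksmult (M x z) c (mul x y z a b) \<and>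
        mul x y z a (ksmult (M y z) c b) = ksmult (M x z) c (mul x y z a b)"
   "\<forall>x\<in>X. \<forall>y\<in>X. \<forall>z\<in>X. \<forall>w\<in>X. \<forall>a\<in>kcarrier (M x y). \<forall>b\<in>kcarrier (M y z). \<forall>c\<in>kcarrier (M z w).
        mul x z w (mul x y z a b) c = mul x y w a (mul y z w b c)"
   "\<forall>x\<in>X. onef x \<in> kcarrier (M x x)"
   "\<forall>x\<in>X. \<forall>y\<in>X. \<forall>a\<in>kcarrier (M x y). mul x x y (onef x) a = a \<and> mul x y y a (onef y) = a"
  apply (insert assms[unfolded klin_cat_def])
  apply (elim conjE; assumption)+
  done

lemma linmap_comp: "linmap A B F \<Longrightarrow> linmap B C G \<Longrightarrow> linmap A C (\<lambda>t. G (F t))"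
  unfolding linmap_def by auto

lemma linmap_inv:
  assumes kA: "is_kmod A" and F: "linmap A B F" and bij: "bij_betw F (kcarrier A) (kcarrier B)"
  shows "linmap B A (inv_into (kcarrier A) F)"
proof -
  interpret A: kmodl A by unfold_locales (rule kA)
  let ?G = "inv_into (kcarrier A) F"
  have inj: "inj_on F (kcarrier A)" and surj: "F ` kcarrier A = kcarrier B" using bij by (auto simp: bij_betw_def)
  have G1: "y \<in> kcarrier B \<Longrightarrow> ?G y \<in> kcarrier A" for y using surj by (metis inv_into_into)
  have G2: "y \<in> kcarrier B \<Longrightarrow> F (?G y) = y" for y using surj by (metis f_inv_into_f)
  have G3: "x \<in> kcarrier A \<Longrightarrow> ?G (F x) = x" for x using inj by (rule inv_into_f_f)
  show ?thesis unfolding linmap_def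
  proof (intro conjI ballI allI)
    fix y assume "y \<in> kcarrier B" then show "?G y \<in> kcarrier A" by (rule G1)
  next
    fix y y' assume y: "y \<in> kcarrier B" "y' \<in> kcarrier B"
    have "F (kadd A (?G y) (?G y')) = kadd B y y'" using F G1 G2 y by (simp add: linmapD)
    then have "?G (kadd B y y') = ?G (F (kadd A (?G y) (?G y')))" by simp
    also have "\<dots> = kadd A (?G y) (?G y')" using G1 G3 y by simp
    finally show "?G (kadd B y y') = kadd A (?G y) (?G y')" .
  next
    fix c y assume y: "y \<in> kcarrier B"
    have "F (ksmult A c (?G y)) = ksmult B c y" using F G1 G2 y by (simp add: linmapD)
    then have "?G (ksmult B c y) = ?G (F (ksmult A c (?G y)))" by simp
    also have "\<dots> = ksmult A c (?G y)" using G1 G3 y by simp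
    finally show "?G (ksmult B c y) = ksmult A c (?G y)" .
  qed
qed

lemma linmap_id': "linmap M M id"
  by (simp add: linmap_def)

locale gal =
  fixes X :: "'x set"
    and H :: "'x \<Rightarrow> 'x \<Rightarrow> ('h, 'k::comm_ring_1) kmod"
    and hmul :: "'x \<Rightarrow> 'x \<Rightarrow> 'x \<Rightarrow> 'h \<Rightarrow> 'h \<Rightarrow> 'h" and hone :: "'x \<Rightarrow> 'h"
    and D :: "'x \<Rightarrow> 'x \<Rightarrow> 'h \<Rightarrow> ('h \<times> 'h \<Rightarrow> int) set" and e :: "'x \<Rightarrow> 'x \<Rightarrow> 'h \<Rightarrow> 'k"
    and A :: "'x \<Rightarrow> 'x \<Rightarrow> ('a, 'k) kmod"
    and mul :: "'x \<Rightarrow> 'x \<Rightarrow> 'x \<Rightarrow> 'a \<Rightarrow> 'a \<Rightarrow> 'a" and one :: "'x \<Rightarrow> 'a"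
    and rho :: "'x \<Rightarrow> 'x \<Rightarrow> 'a \<Rightarrow> ('a \<times> 'h \<Rightarrow> int) set"
  assumes SH: "semi_hopf_cat X H hmul hone D e"
    and RC: "rcomod_cat X H hmul hone D e A mul one rho"
begin

lemma Hcat: "klin_cat X H hmul hone" using SH by (simp add: semi_hopf_cat_def)
lemma Acat: "klin_cat X A mul one" using RC by (simp add: rcomod_cat_def)

lemma rc_parts:
  "\<forall>x\<in>X. \<forall>y\<in>X. is_rcomodule (A x y) (H x y) (D x y) (e x y) (rho x y)"
  "\<forall>x\<in>X. \<forall>y\<in>X. \<forall>z\<in>X. \<forall>a\<in>kcarrier (A x y). \<forall>b\<in>kcarrier (A y z).
        rho x z (mul x y z a b) =
          kprod (A x y) (H x y) (A y z) (H y z) (A x z) (H x z) (mul x y z) (hmul x y z)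
                (rho x y a) (rho y z b)"
  apply (insert RC[unfolded rcomod_cat_def])
  apply (elim conjE; assumption)+
  done

lemmas AP = klin_cat_parts[OF Acat]
lemmas HP = klin_cat_parts[OF Hcat]

lemma A_kmod: "x \<in> X \<Longrightarrow> y \<in> X \<Longrightarrow> is_kmod (A x y)" using AP(1) by blast
lemma H_kmod: "x \<in> X \<Longrightarrow> y \<in> X \<Longrightarrow> is_kmod (H x y)" using HP(1) by blast
lemma mul_closed[simp,intro]: "x \<in> X \<Longrightarrow> y \<in> X \<Longrightarrow> z \<in> X \<Longrightarrow> a \<in> kcarrier (A x y) \<Longrightarrow> b \<in> kcarrier (A y z) \<Longrightarrow>
   mul x y z a b \<in> kcarrier (A x z)" using AP(2) by blast
lemma mul_add_l: "x \<in> X \<Longrightarrow> y \<in> X \<Longrightarrow> z \<in> X \<Longrightarrow> a \<in> kcarrier (A x y) \<Longrightarrow> a' \<in> kcarrier (A x y) \<Longrightarrow> b \<in> kcarrier (A y z) \<Longrightarrow>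
   mul x y z (kadd (A x y) a a') b = kadd (A x z) (mul x y z a b) (mul x y z a' b)" using AP(3) by blast
lemma mul_add_r: "x \<in> X \<Longrightarrow> y \<in> X \<Longrightarrow> z \<in> X \<Longrightarrow> a \<in> kcarrier (A x y) \<Longrightarrow> b \<in> kcarrier (A y z) \<Longrightarrow> b' \<in> kcarrier (A y z) \<Longrightarrow>
   mul x y z a (kadd (A y z) b b') = kadd (A x z) (mul x y z a b) (mul x y z a b')" using AP(4) by blast
lemma mul_smult_l: "x \<in> X \<Longrightarrow> y \<in> X \<Longrightarrow> z \<in> X \<Longrightarrow> a \<in> kcarrier (A x y) \<Longrightarrow> b \<in> kcarrier (A y z) \<Longrightarrow>
   mul x y z (ksmult (A x y) c a) b = ksmult (A x z) c (mul x y z a b)" using AP(5) by blast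
lemma mul_smult_r: "x \<in> X \<Longrightarrow> y \<in> X \<Longrightarrow> z \<in> X \<Longrightarrow> a \<in> kcarrier (A x y) \<Longrightarrow> b \<in> kcarrier (A y z) \<Longrightarrow>
   mul x y z a (ksmult (A y z) c b) = ksmult (A x z) c (mul x y z a b)" using AP(5) by blast
lemma mul_assoc: "x \<in> X \<Longrightarrow> y \<in> X \<Longrightarrow> z \<in> X \<Longrightarrow> w \<in> X \<Longrightarrow> a \<in> kcarrier (A x y) \<Longrightarrow> b \<in> kcarrier (A y z) \<Longrightarrow> c \<in> kcarrier (A z w) \<Longrightarrow>
   mul x z w (mul x y z a b) c = mul x y w a (mul y z w b c)" using AP(6) by blast
lemma one_closed[simp,intro]: "x \<in> X \<Longrightarrow> one x \<in> kcarrier (A x x)" using AP(7) by blast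
lemma mul_one_l[simp]: "x \<in> X \<Longrightarrow> y \<in> X \<Longrightarrow> a \<in> kcarrier (A x y) \<Longrightarrow> mul x x y (one x) a = a" using AP(8) by blast
lemma mul_one_r[simp]: "x \<in> X \<Longrightarrow> y \<in> X \<Longrightarrow> a \<in> kcarrier (A x y) \<Longrightarrow> mul x y y a (one y) = a" using AP(8) by blast

lemma hmul_closed[simp,intro]: "x \<in> X \<Longrightarrow> y \<in> X \<Longrightarrow> z \<in> X \<Longrightarrow> a \<in> kcarrier (H x y) \<Longrightarrow> b \<in> kcarrier (H y z) \<Longrightarrow>
   hmul x y z a b \<in> kcarrier (H x z)" using HP(2) by blast
lemma hmul_add_l: "x \<in> X \<Longrightarrow> y \<in> X \<Longrightarrow> z \<in> X \<Longrightarrow> a \<in> kcarrier (H x y) \<Longrightarrow> a' \<in> kcarrier (H x y) \<Longrightarrow> b \<in> kcarrier (H y z) \<Longrightarrow>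
   hmul x y z (kadd (H x y) a a') b = kadd (H x z) (hmul x y z a b) (hmul x y z a' b)" using HP(3) by blast
lemma hmul_add_r: "x \<in> X \<Longrightarrow> y \<in> X \<Longrightarrow> z \<in> X \<Longrightarrow> a \<in> kcarrier (H x y) \<Longrightarrow> b \<in> kcarrier (H y z) \<Longrightarrow> b' \<in> kcarrier (H y z) \<Longrightarrow>
   hmul x y z a (kadd (H y z) b b') = kadd (H x z) (hmul x y z a b) (hmul x y z a b')" using HP(4) by blast
lemma hmul_smult_l: "x \<in> X \<Longrightarrow> y \<in> X \<Longrightarrow> z \<in> X \<Longrightarrow> a \<in> kcarrier (H x y) \<Longrightarrow> b \<in> kcarrier (H y z) \<Longrightarrow>
   hmul x y z (ksmult (H x y) c a) b = ksmult (H x z) c (hmul x y z a b)" using HP(5) by blast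
lemma hmul_smult_r: "x \<in> X \<Longrightarrow> y \<in> X \<Longrightarrow> z \<in> X \<Longrightarrow> a \<in> kcarrier (H x y) \<Longrightarrow> b \<in> kcarrier (H y z) \<Longrightarrow>
   hmul x y z a (ksmult (H y z) c b) = ksmult (H x z) c (hmul x y z a b)" using HP(5) by blast
lemma hone_closed[simp,intro]: "x \<in> X \<Longrightarrow> hone x \<in> kcarrier (H x x)" using HP(7) by blast
lemma hmul_one_l[simp]: "x \<in> X \<Longrightarrow> y \<in> X \<Longrightarrow> a \<in> kcarrier (H x y) \<Longrightarrow> hmul x x y (hone x) a = a" using HP(8) by blast

lemma rho_lin: "x \<in> X \<Longrightarrow> y \<in> X \<Longrightarrow> linmap (A x y) (ktens (A x y) (H x y)) (rho x y)"
  using rc_parts(1) unfolding is_rcomodule_def by blast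
lemma rho_mul: "x \<in> X \<Longrightarrow> y \<in> X \<Longrightarrow> z \<in> X \<Longrightarrow> a \<in> kcarrier (A x y) \<Longrightarrow> b \<in> kcarrier (A y z) \<Longrightarrow>
        rho x z (mul x y z a b) =
          kprod (A x y) (H x y) (A y z) (H y z) (A x z) (H x z) (mul x y z) (hmul x y z)
                (rho x y a) (rho y z b)"
  using rc_parts(2) by blast

abbreviation "B x \<equiv> coinv H hone A rho x"
abbreviation "BB z x y \<equiv> bbal A mul (B x) z x y"
abbreviation "BT z x y \<equiv> btens H hone A mul rho z x y"
abbreviation "KT u v x y \<equiv> ktens (A u v) (H x y)"
abbreviation "cn z x y \<equiv> can H hone A mul rho z x y"

lemma BT_def': "BT z x y = tensor (A z x) (A x y) (BB z x y)" by (simp add: btens_def)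
lemma bsimple_def': "bsimple H hone A mul rho z x y = tsimple (A z x) (A x y) (BB z x y)" by (simp add: bsimple_def)

lemma B_sub: "b \<in> B x \<Longrightarrow> b \<in> kcarrier (A x x)" by (simp add: coinv_def)
lemma B_rho: "b \<in> B x \<Longrightarrow> rho x x b = ksimple (A x x) (H x x) b (hone x)" by (simp add: coinv_def)

lemma mul_linmap: "z \<in> X \<Longrightarrow> w \<in> X \<Longrightarrow> y \<in> X \<Longrightarrow> a \<in> kcarrier (A z w) \<Longrightarrow> linmap (A w y) (A z y) (mul z w y a)"
  unfolding linmap_def by (simp add: mul_add_r mul_smult_r)

lemma hmul_linmap: "x \<in> X \<Longrightarrow> y \<in> X \<Longrightarrow> h \<in> kcarrier (H x x) \<Longrightarrow> linmap (H x y) (H x y) (hmul x x y h)"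
  unfolding linmap_def by (simp add: hmul_add_r hmul_smult_r)

lemma tens_BB: assumes "z \<in> X" "x \<in> X" "y \<in> X" shows "tens (A z x) (A x y) (BB z x y)"
proof -
  interpret M: kmodl "A z x" by unfold_locales (rule A_kmod[OF assms(1,2)])
  interpret N: kmodl "A x y" by unfold_locales (rule A_kmod[OF assms(2,3)])
  show ?thesis
  proof unfold_locales
    show "BB z x y \<subseteq> (kcarrier (A z x) \<times> kcarrier (A x y)) \<times> kcarrier (A z x) \<times> kcarrier (A x y)"
      using assms by (auto simp: bbal_def kbal_def B_sub)
  next
    fix p p' c assume "(p, p') \<in> BB z x y"
    then consider (k) "(p, p') \<in> kbal (A z x) (A x y)"
      | (b) a b a' where "p = (mul z x x a b, a')" "p' = (a, mul x x y b a')" "a \<in> kcarrier (A z x)" "b \<in> B x" "a' \<in> kcarrier (A x y)"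
      unfolding bbal_def by blast
    then show "((ksmult (A z x) c (fst p), snd p), ksmult (A z x) c (fst p'), snd p') \<in> BB z x y"
    proof cases
      case k
      then obtain d m n where "p = (ksmult (A z x) d m, n)" "p' = (m, ksmult (A x y) d n)" "m \<in> kcarrier (A z x)" "n \<in> kcarrier (A x y)"
        by (auto simp: kbal_def)
      moreover have "ksmult (A z x) c (ksmult (A z x) d m) = ksmult (A z x) d (ksmult (A z x) c m)" using calculation by (simp add: M.smult_comm)
      ultimately show ?thesis unfolding bbal_def kbal_def by auto
    next
      case b
      then have "ksmult (A z x) c (mul z x x a b) = mul z x x (ksmult (A z x) c a) b"
        using assms by (simp add: mul_smult_l B_sub)
      then show ?thesis using b unfolding bbal_def by auto
    qed
  qed
qed

lemma kbal_BB: "kbal (A z x) (A x y) \<subseteq> BB z x y" by (auto simp: bbal_def)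

lemma okK: "z \<in> X \<Longrightarrow> w \<in> X \<Longrightarrow> x \<in> X \<Longrightarrow> y \<in> X \<Longrightarrow> a \<in> kcarrier (A z w) \<Longrightarrow>
  tm_ok (A w y) (H x y) (kbal (A w y) (H x y)) (A z y) (H x y) (kbal (A z y) (H x y)) (mul z w y a) id"
  by (intro tm_ok_kbal A_kmod H_kmod mul_linmap linmap_id')

lemma okB: assumes "z \<in> X" "w \<in> X" "x \<in> X" "y \<in> X" "a \<in> kcarrier (A z w)"
  shows "tm_ok (A w x) (A x y) (BB w x y) (A z x) (A x y) (BB z x y) (mul z w x a) id"
  unfolding tm_ok_def
proof (intro conjI)
  show "tens (A w x) (A x y) (BB w x y)" "tens (A z x) (A x y) (BB z x y)" using assms tens_BB by auto
  show "linmap (A w x) (A z x) (mul z w x a)" using assms by (simp add: mul_linmap)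
  show "linmap (A x y) (A x y) id" by (rule linmap_id')
  show "balmap (BB w x y) (BB z x y) (mul z w x a) id"
    unfolding balmap_def
  proof (intro allI impI)
    fix p p' assume "(p, p') \<in> BB w x y"
    then consider (k) "(p, p') \<in> kbal (A w x) (A x y)"
      | (b) u b v where "p = (mul w x x u b, v)" "p' = (u, mul x x y b v)" "u \<in> kcarrier (A w x)" "b \<in> B x" "v \<in> kcarrier (A x y)"
      unfolding bbal_def by blast
    then show "((mul z w x a (fst p), id (snd p)), mul z w x a (fst p'), id (snd p')) \<in> BB z x y"
    proof cases
      case k
      then obtain d m n where "p = (ksmult (A w x) d m, n)" "p' = (m, ksmult (A x y) d n)" "m \<in> kcarrier (A w x)" "n \<in> kcarrier (A x y)"
        by (auto simp: kbal_def)
      then show ?thesis using assms unfolding bbal_def kbal_def by (auto simp: mul_smult_r)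
    next
      case b
      then have "mul z w x a (mul w x x u b) = mul z x x (mul z w x a u) b"
        using assms by (simp add: mul_assoc B_sub)
      then show ?thesis using b assms unfolding bbal_def by auto
    qed
  qed
qed

end


context gal
begin

lemma A_kmodl: "x \<in> X \<Longrightarrow> y \<in> X \<Longrightarrow> kmodl (A x y)" by (simp add: kmodl_def A_kmod)
lemma H_kmodl: "x \<in> X \<Longrightarrow> y \<in> X \<Longrightarrow> kmodl (H x y)" by (simp add: kmodl_def H_kmod)
lemma A_add[simp]: "x \<in> X \<Longrightarrow> y \<in> X \<Longrightarrow> a \<in> kcarrier (A x y) \<Longrightarrow> b \<in> kcarrier (A x y) \<Longrightarrow> kadd (A x y) a b \<in> kcarrier (A x y)"
  using kmodl.add_closed[OF A_kmodl] by blast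
lemma A_smult[simp]: "x \<in> X \<Longrightarrow> y \<in> X \<Longrightarrow> a \<in> kcarrier (A x y) \<Longrightarrow> ksmult (A x y) c a \<in> kcarrier (A x y)"
  using kmodl.smult_closed[OF A_kmodl] by blast
lemma H_add[simp]: "x \<in> X \<Longrightarrow> y \<in> X \<Longrightarrow> a \<in> kcarrier (H x y) \<Longrightarrow> b \<in> kcarrier (H x y) \<Longrightarrow> kadd (H x y) a b \<in> kcarrier (H x y)"
  using kmodl.add_closed[OF H_kmodl] by blast
lemma H_smult[simp]: "x \<in> X \<Longrightarrow> y \<in> X \<Longrightarrow> a \<in> kcarrier (H x y) \<Longrightarrow> ksmult (H x y) c a \<in> kcarrier (H x y)"
  using kmodl.smult_closed[OF H_kmodl] by blast

lemma okKH: "x \<in> X \<Longrightarrow> y \<in> X \<Longrightarrow> a \<in> kcarrier (A x x) \<Longrightarrow> h \<in> kcarrier (H x x) \<Longrightarrow>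
  tm_ok (A x y) (H x y) (kbal (A x y) (H x y)) (A x y) (H x y) (kbal (A x y) (H x y)) (mul x x y a) (hmul x x y h)"
  by (intro tm_ok_kbal A_kmod H_kmod mul_linmap hmul_linmap)

lemma tens_KT: "u \<in> X \<Longrightarrow> v \<in> X \<Longrightarrow> x \<in> X \<Longrightarrow> y \<in> X \<Longrightarrow> tens (A u v) (H x y) (kbal (A u v) (H x y))"
  by (intro tens_kbal A_kmod H_kmod)

lemma KT_kmod: "u \<in> X \<Longrightarrow> v \<in> X \<Longrightarrow> x \<in> X \<Longrightarrow> y \<in> X \<Longrightarrow> is_kmod (KT u v x y)"
  by (intro tens_kmodT tens_KT)

lemma BT_kmod: "z \<in> X \<Longrightarrow> x \<in> X \<Longrightarrow> y \<in> X \<Longrightarrow> is_kmod (BT z x y)"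
  unfolding BT_def' by (intro tens_kmodT tens_BB)

lemma kprod_B:
  assumes x: "x \<in> X" and y: "y \<in> X" and b: "b \<in> kcarrier (A x x)" and s: "s \<in> kcarrier (KT x y x y)"
  shows "kprod (A x x) (H x x) (A x y) (H x y) (A x y) (H x y) (mul x x y) (hmul x x y) (ksimple (A x x) (H x x) b (hone x)) s
    = kmap (A x y) (H x y) (A x y) (H x y) (mul x x y b) id s"
proof -
  define \<beta> where "\<beta> = (\<lambda>(a, h). kmap (A x y) (H x y) (A x y) (H x y) (mul x x y a) (hmul x x y h) s)"
  have kp: "kprod (A x x) (H x x) (A x y) (H x y) (A x y) (H x y) (mul x x y) (hmul x x y) t s
      = klift (A x x) (H x x) (KT x y x y) \<beta> t" for t
    unfolding kprod_def \<beta>_def tmap_def by simp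
  interpret L: tlin "A x x" "H x x" "kbal (A x x) (H x x)" "KT x y x y"
    by (intro tlinI tens_KT KT_kmod x y)
  interpret KT: kmodl "KT x y x y" by unfold_locales (rule KT_kmod[OF x y x y])
  have bal: "\<beta> (ksmult (A x x) c m, n) = \<beta> (m, ksmult (H x x) c n)"
    if mn: "m \<in> kcarrier (A x x)" "n \<in> kcarrier (H x x)" for c m n
  proof -
    have "\<beta> (ksmult (A x x) c m, n) = ksmult (KT x y x y) c (kmap (A x y) (H x y) (A x y) (H x y) (mul x x y m) (hmul x x y n) s)"
      unfolding \<beta>_def by (simp only: prod.case, rule tmap_smult_fun[OF okKH[OF x y] okKH[OF x y]]) (simp_all add: mul_smult_l mn x y s)
    also have "\<dots> = \<beta> (m, ksmult (H x x) c n)"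
      unfolding \<beta>_def by (simp only: prod.case, rule tmap_smult_fun_r[OF okKH[OF x y] okKH[OF x y], symmetric]) (simp_all add: hmul_smult_l mn x y s)
    finally show ?thesis .
  qed
  have bg: "bgood (A x x) (H x x) (kbal (A x x) (H x x)) (KT x y x y) \<beta>"
    unfolding bgood_def bmap_def
    apply (intro conjI)
    subgoal unfolding \<beta>_def using s okKH[OF x y] by (simp add: tmap_closed)
    subgoal unfolding \<beta>_def
      apply (intro ballI)
      apply (simp only: prod.case)
      apply (rule tmap_add_fun[OF okKH[OF x y] okKH[OF x y] okKH[OF x y]])
      apply (simp_all add: mul_add_l x y s)
      done
    subgoal unfolding \<beta>_def
      apply (intro ballI)
      apply (simp only: prod.case)
      apply (rule tmap_add_fun_r[OF okKH[OF x y] okKH[OF x y] okKH[OF x y]])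
      apply (simp_all add: hmul_add_l x y s)
      done
    apply clarify
    subgoal for a h a' h'
      using bal unfolding kbal_def by clarsimp
    done
  have "kprod (A x x) (H x x) (A x y) (H x y) (A x y) (H x y) (mul x x y) (hmul x x y) (ksimple (A x x) (H x x) b (hone x)) s
      = \<beta> (b, hone x)"
    unfolding kp using L.tlift_simple[OF bg b hone_closed[OF x]] .
  also have "\<dots> = kmap (A x y) (H x y) (A x y) (H x y) (mul x x y b) id s"
    unfolding \<beta>_def by (simp only: prod.case, rule tmap_cong[OF okKH[OF x y b hone_closed[OF x]] okK[OF x x x y b]]) (simp_all add: x y b s)
  finally show ?thesis .
qed

lemma rho_B:
  assumes x: "x \<in> X" and y: "y \<in> X" and b: "b \<in> B x" and a: "a \<in> kcarrier (A x y)"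
  shows "rho x y (mul x x y b a) = kmap (A x y) (H x y) (A x y) (H x y) (mul x x y b) id (rho x y a)"
  using rho_mul[OF x x y B_sub[OF b] a] B_rho[OF b] kprod_B[OF x y B_sub[OF b]] rho_lin[OF x y] a
  by (simp add: linmapD)

definition bcan where
  "bcan z x y = (\<lambda>(a, a'). kmap (A x y) (H x y) (A z y) (H x y) (mul z x y a) id (rho x y a'))"

lemma cn_eq: "cn z x y = tlift (A z x) (A x y) (BB z x y) (KT z y x y) (bcan z x y)"
  by (simp add: can_def bcan_def)

lemma rho_in: "x \<in> X \<Longrightarrow> y \<in> X \<Longrightarrow> a \<in> kcarrier (A x y) \<Longrightarrow> rho x y a \<in> kcarrier (KT x y x y)"
  by (rule linmapD(1)[OF rho_lin])

lemma bcan_good: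
  assumes z: "z \<in> X" and x: "x \<in> X" and y: "y \<in> X"
  shows "bgood (A z x) (A x y) (BB z x y) (KT z y x y) (bcan z x y)" "bklin (A z x) (A x y) (KT z y x y) (bcan z x y)"
proof -
  interpret KT: kmodl "KT z y x y" by unfold_locales (rule KT_kmod[OF z y x y])
  note ok = okK[OF z x x y]
  show "bgood (A z x) (A x y) (BB z x y) (KT z y x y) (bcan z x y)"
    unfolding bgood_def bmap_def
    apply (intro conjI)
    subgoal unfolding bcan_def using ok z x y by (simp add: tmap_closed rho_in)
    subgoal unfolding bcan_def
      apply (intro ballI)
      apply (simp only: prod.case)
      apply (rule tmap_add_fun[OF ok ok ok])
      apply (simp_all add: mul_add_l z x y rho_in)
      done
    subgoal unfolding bcan_def
      apply (intro ballI)
      apply (simp only: prod.case)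
      subgoal for m n n'
        using rho_lin[OF x y] tmap_linmap[OF ok[of m]] by (simp add: linmapD rho_in x y)
      done
    apply clarify
    subgoal for a a' u v
    proof -
      assume "((a, a'), (u, v)) \<in> BB z x y"
      then consider (k) c where "a = ksmult (A z x) c u" "v = ksmult (A x y) c a'" "u \<in> kcarrier (A z x)" "a' \<in> kcarrier (A x y)"
        | (b) b where "a = mul z x x u b" "v = mul x x y b a'" "u \<in> kcarrier (A z x)" "b \<in> B x" "a' \<in> kcarrier (A x y)"
        unfolding bbal_def kbal_def by blast
      then show "bcan z x y (a, a') = bcan z x y (u, v)"
      proof cases
        case k
        have "bcan z x y (a, a') = ksmult (KT z y x y) c (kmap (A x y) (H x y) (A z y) (H x y) (mul z x y u) id (rho x y a'))"
          unfolding bcan_def by (simp only: prod.case, rule tmap_smult_fun[OF ok ok]) (simp_all add: k mul_smult_l rho_in z x y)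
        also have "\<dots> = bcan z x y (u, v)"
          unfolding bcan_def using linmapD(3)[OF tmap_linmap[OF ok[OF k(3)]] rho_in[OF x y k(4)], of c]
            linmapD(3)[OF rho_lin[OF x y] k(4), of c] k by simp
        finally show ?thesis .
      next
        case b
        have bx: "b \<in> kcarrier (A x x)" using b(4) by (rule B_sub)
        have "bcan z x y (u, v) = kmap (A x y) (H x y) (A z y) (H x y) (mul z x y u) id
            (kmap (A x y) (H x y) (A x y) (H x y) (mul x x y b) id (rho x y a'))"
          unfolding bcan_def using b rho_B[OF x y b(4) b(5)] by simp
        also have "\<dots> = kmap (A x y) (H x y) (A z y) (H x y) (mul z x y (mul z x x u b)) id (rho x y a')"
          by (rule tmap_comp[OF okK[OF x x x y bx] okK[OF z x x y] okK[OF z x x y]]) (simp_all add: b bx mul_assoc rho_in z x y)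
        finally show ?thesis unfolding bcan_def using b by simp
      qed
    qed
    done
  show "bklin (A z x) (A x y) (KT z y x y) (bcan z x y)"
    unfolding bklin_def bcan_def
    apply (intro allI ballI)
    apply (simp only: prod.case)
    apply (rule tmap_smult_fun[OF ok ok])
    apply (simp_all add: mul_smult_l rho_in z x y)
    done
qed

lemma can_tlin: "z \<in> X \<Longrightarrow> x \<in> X \<Longrightarrow> y \<in> X \<Longrightarrow> tlin (A z x) (A x y) (BB z x y) (KT z y x y)"
  by (intro tlinI tens_BB KT_kmod)

lemma cn_linmap: "z \<in> X \<Longrightarrow> x \<in> X \<Longrightarrow> y \<in> X \<Longrightarrow> linmap (BT z x y) (KT z y x y) (cn z x y)"
  unfolding cn_eq BT_def' by (rule tlin.tlift_linmap[OF can_tlin bcan_good])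

lemma cn_simple: "z \<in> X \<Longrightarrow> x \<in> X \<Longrightarrow> y \<in> X \<Longrightarrow> a \<in> kcarrier (A z x) \<Longrightarrow> a' \<in> kcarrier (A x y) \<Longrightarrow>
  cn z x y (bsimple H hone A mul rho z x y a a') = kmap (A x y) (H x y) (A z y) (H x y) (mul z x y a) id (rho x y a')"
  unfolding cn_eq bsimple_def' using tlin.tlift_simple[OF can_tlin bcan_good(1)] by (simp add: bcan_def)

end


context gal
begin

abbreviation "tmB z w x y a \<equiv> tmap (A w x) (A x y) (BB w x y) (A z x) (A x y) (BB z x y) (mul z w x a) id"
abbreviation "kmK z w x y a \<equiv> kmap (A w y) (H x y) (A z y) (H x y) (mul z w y a) id"

lemma bsimple_in: "z \<in> X \<Longrightarrow> x \<in> X \<Longrightarrow> y \<in> X \<Longrightarrow> a \<in> kcarrier (A z x) \<Longrightarrow> a' \<in> kcarrier (A x y) \<Longrightarrow>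
  bsimple H hone A mul rho z x y a a' \<in> kcarrier (BT z x y)"
  unfolding bsimple_def' BT_def' by (rule tens.simple_in[OF tens_BB])

lemma cn_tmB:
  assumes z: "z \<in> X" and w: "w \<in> X" and x: "x \<in> X" and y: "y \<in> X" and a: "a \<in> kcarrier (A z w)"
    and t: "t \<in> kcarrier (BT w x y)"
  shows "cn z x y (tmB z w x y a t) = kmK z w x y a (cn w x y t)"
proof -
  interpret L: tlin "A w x" "A x y" "BB w x y" "KT z y x y" by (intro tlinI tens_BB KT_kmod z w x y)
  show ?thesis
  proof (rule L.tensor_ext[OF addmap_comp[OF tmap_addmap[OF okB[OF z w x y a]] linmap_addmap[OF cn_linmap[OF z x y, unfolded BT_def']]]
        addmap_comp[OF linmap_addmap[OF cn_linmap[OF w x y, unfolded BT_def']] tmap_addmap[OF okK[OF z w x y a]]] _ t[unfolded BT_def']])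
    fix u v assume u: "u \<in> kcarrier (A w x)" and v: "v \<in> kcarrier (A x y)"
    have "cn z x y (tmB z w x y a (tsimple (A w x) (A x y) (BB w x y) u v))
       = kmap (A x y) (H x y) (A z y) (H x y) (mul z x y (mul z w x a u)) id (rho x y v)"
      using tmap_simple[OF okB[OF z w x y a] u v] cn_simple[OF z x y _ v, of "mul z w x a u"] u a z w x
      by (simp add: bsimple_def')
    also have "\<dots> = kmK z w x y a (kmap (A x y) (H x y) (A w y) (H x y) (mul w x y u) id (rho x y v))"
      by (rule tmap_comp[OF okK[OF w x x y u] okK[OF z w x y a] okK[OF z x x y], symmetric])
         (simp_all add: u a v z w x y mul_assoc rho_in)
    also have "kmap (A x y) (H x y) (A w y) (H x y) (mul w x y u) id (rho x y v) = cn w x y (tsimple (A w x) (A x y) (BB w x y) u v)"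
      using cn_simple[OF w x y u v] by (simp add: bsimple_def')
    finally show "cn z x y (tmB z w x y a (tsimple (A w x) (A x y) (BB w x y) u v)) = kmK z w x y a (cn w x y (tsimple (A w x) (A x y) (BB w x y) u v))" .
  qed
qed

abbreviation "Psi \<gamma> z x y \<equiv> klift (A z y) (H x y) (BT z x y) (\<lambda>(a, h). tmB z y x y a (\<gamma> h))"

lemma Psi_good:
  assumes z: "z \<in> X" and x: "x \<in> X" and y: "y \<in> X" and g: "linmap (H x y) (BT y x y) \<gamma>"
  shows "bgood (A z y) (H x y) (kbal (A z y) (H x y)) (BT z x y) (\<lambda>(a, h). tmB z y x y a (\<gamma> h))"
    "bklin (A z y) (H x y) (BT z x y) (\<lambda>(a, h). tmB z y x y a (\<gamma> h))"
proof -
  interpret BTz: kmodl "BT z x y" by unfold_locales (rule BT_kmod[OF z x y])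
  note ok = okB[OF z y x y]
  have gin: "h \<in> kcarrier (H x y) \<Longrightarrow> \<gamma> h \<in> kcarrier (tensor (A y x) (A x y) (BB y x y))" for h
    using linmapD(1)[OF g] by (simp add: BT_def')
  have bal: "tmB z y x y (ksmult (A z y) c m) (\<gamma> n) = tmB z y x y m (\<gamma> (ksmult (H x y) c n))"
    if mn: "m \<in> kcarrier (A z y)" "n \<in> kcarrier (H x y)" for c m n
  proof -
    have "tmB z y x y (ksmult (A z y) c m) (\<gamma> n) = ksmult (BT z x y) c (tmB z y x y m (\<gamma> n))"
      unfolding BT_def' by (rule tmap_smult_fun[OF ok ok]) (simp_all add: mul_smult_l mn z x y gin)
    also have "\<dots> = tmB z y x y m (\<gamma> (ksmult (H x y) c n))"
      using linmapD(3)[OF tmap_linmap[OF ok[OF mn(1)]] gin[OF mn(2)], of c] linmapD(3)[OF g mn(2), of c]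
      by (simp add: BT_def')
    finally show ?thesis .
  qed
  show "bgood (A z y) (H x y) (kbal (A z y) (H x y)) (BT z x y) (\<lambda>(a, h). tmB z y x y a (\<gamma> h))"
    unfolding bgood_def bmap_def
    apply (intro conjI)
    subgoal using tmap_closed[OF ok gin] by (simp add: BT_def')
    subgoal
      apply (intro ballI)
      apply (simp only: prod.case BT_def')
      apply (rule tmap_add_fun[OF ok ok ok])
      apply (simp_all add: mul_add_l z x y gin)
      done
    subgoal
      apply (intro ballI)
      apply (simp only: prod.case)
      subgoal for m n n'
        using linmapD(2)[OF tmap_linmap[OF ok[of m]] gin gin, of n n'] linmapD(2)[OF g, of n n']
        by (simp add: BT_def' z x y)
      done
    apply clarify
    subgoal for a h a' h'
      using bal unfolding kbal_def by clarsimp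
    done
  show "bklin (A z y) (H x y) (BT z x y) (\<lambda>(a, h). tmB z y x y a (\<gamma> h))"
    unfolding bklin_def
    apply (intro allI ballI)
    apply (simp only: prod.case BT_def')
    apply (rule tmap_smult_fun[OF ok ok])
    apply (simp_all add: mul_smult_l z x y gin)
    done
qed

lemma Psi_tlin: "z \<in> X \<Longrightarrow> x \<in> X \<Longrightarrow> y \<in> X \<Longrightarrow> tlin (A z y) (H x y) (kbal (A z y) (H x y)) (BT z x y)"
  by (intro tlinI tens_KT BT_kmod)

lemma Psi_linmap: "z \<in> X \<Longrightarrow> x \<in> X \<Longrightarrow> y \<in> X \<Longrightarrow> linmap (H x y) (BT y x y) \<gamma> \<Longrightarrow>
  linmap (KT z y x y) (BT z x y) (Psi \<gamma> z x y)"
  by (rule tlin.tlift_linmap[OF Psi_tlin Psi_good])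

lemma Psi_simple: "z \<in> X \<Longrightarrow> x \<in> X \<Longrightarrow> y \<in> X \<Longrightarrow> linmap (H x y) (BT y x y) \<gamma> \<Longrightarrow>
  a \<in> kcarrier (A z y) \<Longrightarrow> h \<in> kcarrier (H x y) \<Longrightarrow>
  Psi \<gamma> z x y (ksimple (A z y) (H x y) a h) = tmB z y x y a (\<gamma> h)"
  using tlin.tlift_simple[OF Psi_tlin Psi_good(1)] by simp

lemma cn_Psi:
  assumes z: "z \<in> X" and x: "x \<in> X" and y: "y \<in> X" and g: "linmap (H x y) (BT y x y) \<gamma>"
    and g1: "\<forall>h\<in>kcarrier (H x y). cn y x y (\<gamma> h) = ksimple (A y y) (H x y) (one y) h"
    and s: "s \<in> kcarrier (KT z y x y)"
  shows "cn z x y (Psi \<gamma> z x y s) = s"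
proof -
  interpret L: tlin "A z y" "H x y" "kbal (A z y) (H x y)" "KT z y x y" by (intro tlinI tens_KT KT_kmod z x y)
  show ?thesis
  proof (rule L.tensor_ext[OF addmap_comp[OF linmap_addmap[OF Psi_linmap[OF z x y g]] linmap_addmap[OF cn_linmap[OF z x y]]]
        addmap_id _ s])
    fix a h assume a: "a \<in> kcarrier (A z y)" and h: "h \<in> kcarrier (H x y)"
    have gin: "\<gamma> h \<in> kcarrier (BT y x y)" using linmapD(1)[OF g h] .
    have "cn z x y (Psi \<gamma> z x y (ksimple (A z y) (H x y) a h)) = cn z x y (tmB z y x y a (\<gamma> h))"
      using Psi_simple[OF z x y g a h] by simp
    also have "\<dots> = kmK z y x y a (cn y x y (\<gamma> h))" by (rule cn_tmB[OF z y x y a gin])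
    also have "\<dots> = kmK z y x y a (ksimple (A y y) (H x y) (one y) h)" using g1 h by simp
    also have "\<dots> = ksimple (A z y) (H x y) a h"
      using tmap_simple[OF okK[OF z y x y a] one_closed[OF y] h] a z y by simp
    finally show "cn z x y (Psi \<gamma> z x y (ksimple (A z y) (H x y) a h)) = ksimple (A z y) (H x y) a h" .
  qed
qed

lemma Psi_kmK:
  assumes z: "z \<in> X" and x: "x \<in> X" and y: "y \<in> X" and g: "linmap (H x y) (BT y x y) \<gamma>"
    and a: "a \<in> kcarrier (A z x)" and u: "u \<in> kcarrier (KT x y x y)"
  shows "Psi \<gamma> z x y (kmK z x x y a u) = tmB z x x y a (Psi \<gamma> x x y u)"
proof -
  interpret L: tlin "A x y" "H x y" "kbal (A x y) (H x y)" "BT z x y" by (intro tlinI tens_KT BT_kmod z x y)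
  show ?thesis
  proof (rule L.tensor_ext[OF addmap_comp[OF tmap_addmap[OF okK[OF z x x y a]] linmap_addmap[OF Psi_linmap[OF z x y g]]]
        addmap_comp[OF linmap_addmap[OF Psi_linmap[OF x x y g]] tmap_addmap[OF okB[OF z x x y a], folded BT_def']] _ u])
    fix a'' h assume a'': "a'' \<in> kcarrier (A x y)" and h: "h \<in> kcarrier (H x y)"
    have gin: "\<gamma> h \<in> kcarrier (BT y x y)" using linmapD(1)[OF g h] .
    have "Psi \<gamma> z x y (kmK z x x y a (ksimple (A x y) (H x y) a'' h)) = tmB z y x y (mul z x y a a'') (\<gamma> h)"
      using tmap_simple[OF okK[OF z x x y a] a'' h] Psi_simple[OF z x y g _ h, of "mul z x y a a''"] a a'' z x y by simp
    also have "\<dots> = tmB z x x y a (tmB x y x y a'' (\<gamma> h))"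
      by (rule tmap_comp[OF okB[OF x y x y a''] okB[OF z x x y a] okB[OF z y x y], symmetric])
         (simp_all add: a a'' z x y mul_assoc gin[unfolded BT_def'])
    also have "tmB x y x y a'' (\<gamma> h) = Psi \<gamma> x x y (ksimple (A x y) (H x y) a'' h)"
      using Psi_simple[OF x x y g a'' h] by simp
    finally show "Psi \<gamma> z x y (kmK z x x y a (ksimple (A x y) (H x y) a'' h)) = tmB z x x y a (Psi \<gamma> x x y (ksimple (A x y) (H x y) a'' h))" .
  qed
qed

end


context gal
begin

lemma sim1_linmap:
  assumes x: "x \<in> X" and y: "y \<in> X"
  shows "linmap (H x y) (KT y y x y) (\<lambda>h. ksimple (A y y) (H x y) (one y) h)"
proof -
  interpret S: tens "A y y" "H x y" "kbal (A y y) (H x y)" by (rule tens_KT[OF y y x y])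
  show ?thesis unfolding linmap_def
    using S.simple_add_r S.simple_smult_r[OF order_refl] one_closed[OF y] by auto
qed

lemma imp12:
  assumes P1: "(\<forall>x\<in>X. \<forall>y\<in>X. \<forall>z\<in>X.
             bij_betw (can H hone A mul rho z x y)
               (kcarrier (btens H hone A mul rho z x y)) (kcarrier (ktens (A z y) (H x y))))"
  shows "(\<forall>x\<in>X. \<forall>y\<in>X.
             bij_betw (can H hone A mul rho y x y)
               (kcarrier (btens H hone A mul rho y x y)) (kcarrier (ktens (A y y) (H x y))) \<and>
             (\<exists>g. linmap (ktens (A x y) (H x y)) (btens H hone A mul rho x x y) g \<and>
                  (\<forall>t\<in>kcarrier (btens H hone A mul rho x x y).
                     g (can H hone A mul rho x x y t) = t)))"
proof (intro ballI conjI)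
  fix x y assume x: "x \<in> X" and y: "y \<in> X"
  show "bij_betw (can H hone A mul rho y x y) (kcarrier (btens H hone A mul rho y x y)) (kcarrier (ktens (A y y) (H x y)))"
    using P1 x y by blast
  have bij: "bij_betw (cn x x y) (kcarrier (BT x x y)) (kcarrier (KT x y x y))" using P1 x y by blast
  let ?g = "inv_into (kcarrier (BT x x y)) (cn x x y)"
  have "linmap (KT x y x y) (BT x x y) ?g" by (rule linmap_inv[OF BT_kmod[OF x x y] cn_linmap[OF x x y] bij])
  moreover have "\<forall>t\<in>kcarrier (BT x x y). ?g (cn x x y t) = t"
    using bij by (simp add: bij_betw_def inv_into_f_f)
  ultimately show "\<exists>g. linmap (ktens (A x y) (H x y)) (btens H hone A mul rho x x y) g \<and>
                  (\<forall>t\<in>kcarrier (btens H hone A mul rho x x y). g (can H hone A mul rho x x y t) = t)" by blast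
qed

lemma imp23:
  assumes P2: "(\<forall>x\<in>X. \<forall>y\<in>X.
             bij_betw (can H hone A mul rho y x y)
               (kcarrier (btens H hone A mul rho y x y)) (kcarrier (ktens (A y y) (H x y))) \<and>
             (\<exists>g. linmap (ktens (A x y) (H x y)) (btens H hone A mul rho x x y) g \<and>
                  (\<forall>t\<in>kcarrier (btens H hone A mul rho x x y).
                     g (can H hone A mul rho x x y t) = t)))"
  shows "(\<forall>x\<in>X. \<forall>y\<in>X. \<exists>\<gamma>.
             linmap (H x y) (btens H hone A mul rho y x y) \<gamma> \<and>
             (\<forall>h\<in>kcarrier (H x y).
                can H hone A mul rho y x y (\<gamma> h) = ksimple (A y y) (H x y) (one y) h) \<and>
             (\<forall>a\<in>kcarrier (A x y).
                klift (A x y) (H x y) (btens H hone A mul rho x x y)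
                  (\<lambda>(a', h). tmap (A y x) (A x y) (bbal A mul (coinv H hone A rho x) y x y)
                                  (A x x) (A x y) (bbal A mul (coinv H hone A rho x) x x y)
                                  (mul x y x a') id (\<gamma> h))
                  (rho x y a)
                = bsimple H hone A mul rho x x y (one x) a))"
proof (intro ballI)
  fix x y assume x: "x \<in> X" and y: "y \<in> X"
  have bij: "bij_betw (cn y x y) (kcarrier (BT y x y)) (kcarrier (KT y y x y))" using P2 x y by blast
  obtain g where g: "linmap (KT x y x y) (BT x x y) g" "\<forall>t\<in>kcarrier (BT x x y). g (cn x x y t) = t"
    using P2 x y by blast
  define \<gamma> where "\<gamma> = (\<lambda>h. inv_into (kcarrier (BT y x y)) (cn y x y) (ksimple (A y y) (H x y) (one y) h))"
  have glin: "linmap (H x y) (BT y x y) \<gamma>"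
    unfolding \<gamma>_def by (rule linmap_comp[OF sim1_linmap[OF x y] linmap_inv[OF BT_kmod[OF y x y] cn_linmap[OF y x y] bij]])
  have g1: "\<forall>h\<in>kcarrier (H x y). cn y x y (\<gamma> h) = ksimple (A y y) (H x y) (one y) h"
  proof
    fix h assume h: "h \<in> kcarrier (H x y)"
    have "ksimple (A y y) (H x y) (one y) h \<in> kcarrier (KT y y x y)"
      using linmapD(1)[OF sim1_linmap[OF x y] h] .
    then show "cn y x y (\<gamma> h) = ksimple (A y y) (H x y) (one y) h"
      unfolding \<gamma>_def using bij by (simp add: bij_betw_def f_inv_into_f)
  qed
  have g2: "\<forall>a\<in>kcarrier (A x y). Psi \<gamma> x x y (rho x y a) = bsimple H hone A mul rho x x y (one x) a"
  proof
    fix a assume a: "a \<in> kcarrier (A x y)"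
    have r: "rho x y a \<in> kcarrier (KT x y x y)" by (rule rho_in[OF x y a])
    have i1: "Psi \<gamma> x x y (rho x y a) \<in> kcarrier (BT x x y)" using linmapD(1)[OF Psi_linmap[OF x x y glin] r] .
    have i2: "bsimple H hone A mul rho x x y (one x) a \<in> kcarrier (BT x x y)" by (rule bsimple_in[OF x x y one_closed[OF x] a])
    have c1: "cn x x y (Psi \<gamma> x x y (rho x y a)) = rho x y a" by (rule cn_Psi[OF x x y glin g1 r])
    have c2: "cn x x y (bsimple H hone A mul rho x x y (one x) a) = rho x y a"
      using cn_simple[OF x x y one_closed[OF x] a] tmap_id[OF okK[OF x x x y one_closed[OF x]] _ _ r] x y by simp
    have "Psi \<gamma> x x y (rho x y a) = g (cn x x y (Psi \<gamma> x x y (rho x y a)))" using g(2) i1 by simp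
    also have "\<dots> = g (cn x x y (bsimple H hone A mul rho x x y (one x) a))" using c1 c2 by simp
    also have "\<dots> = bsimple H hone A mul rho x x y (one x) a" using g(2) i2 by simp
    finally show "Psi \<gamma> x x y (rho x y a) = bsimple H hone A mul rho x x y (one x) a" .
  qed
  show "\<exists>\<gamma>. linmap (H x y) (btens H hone A mul rho y x y) \<gamma> \<and>
             (\<forall>h\<in>kcarrier (H x y).
                can H hone A mul rho y x y (\<gamma> h) = ksimple (A y y) (H x y) (one y) h) \<and>
             (\<forall>a\<in>kcarrier (A x y).
                klift (A x y) (H x y) (btens H hone A mul rho x x y)
                  (\<lambda>(a', h). tmap (A y x) (A x y) (bbal A mul (coinv H hone A rho x) y x y)
                                  (A x x) (A x y) (bbal A mul (coinv H hone A rho x) x x y)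
                                  (mul x y x a') id (\<gamma> h))
                  (rho x y a)
                = bsimple H hone A mul rho x x y (one x) a)"
    using glin g1 g2 by blast
qed

lemma imp31:
  assumes P3: "(\<forall>x\<in>X. \<forall>y\<in>X. \<exists>\<gamma>.
             linmap (H x y) (btens H hone A mul rho y x y) \<gamma> \<and>
             (\<forall>h\<in>kcarrier (H x y).
                can H hone A mul rho y x y (\<gamma> h) = ksimple (A y y) (H x y) (one y) h) \<and>
             (\<forall>a\<in>kcarrier (A x y).
                klift (A x y) (H x y) (btens H hone A mul rho x x y)
                  (\<lambda>(a', h). tmap (A y x) (A x y) (bbal A mul (coinv H hone A rho x) y x y)
                                  (A x x) (A x y) (bbal A mul (coinv H hone A rho x) x x y)
                                  (mul x y x a') id (\<gamma> h))
                  (rho x y a)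
                = bsimple H hone A mul rho x x y (one x) a))"
  shows "(\<forall>x\<in>X. \<forall>y\<in>X. \<forall>z\<in>X.
             bij_betw (can H hone A mul rho z x y)
               (kcarrier (btens H hone A mul rho z x y)) (kcarrier (ktens (A z y) (H x y))))"
proof (intro ballI)
  fix x y z assume x: "x \<in> X" and y: "y \<in> X" and z: "z \<in> X"
  obtain \<gamma> where glin: "linmap (H x y) (BT y x y) \<gamma>"
    and g1: "\<forall>h\<in>kcarrier (H x y). cn y x y (\<gamma> h) = ksimple (A y y) (H x y) (one y) h"
    and g2: "\<forall>a\<in>kcarrier (A x y). Psi \<gamma> x x y (rho x y a) = bsimple H hone A mul rho x x y (one x) a"
    using P3 x y by blast
  interpret L: tlin "A z x" "A x y" "BB z x y" "BT z x y" by (intro tlinI tens_BB BT_kmod z x y)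
  have idm: "addmap (tensor (A z x) (A x y) (BB z x y)) (BT z x y) (\<lambda>t. t)" by (simp add: BT_def' addmap_id)
  have left: "Psi \<gamma> z x y (cn z x y t) = t" if t: "t \<in> kcarrier (BT z x y)" for t
  proof (rule L.tensor_ext[OF addmap_comp[OF linmap_addmap[OF cn_linmap[OF z x y, unfolded BT_def']] linmap_addmap[OF Psi_linmap[OF z x y glin]]]
        idm _ t[unfolded BT_def']])
    fix a a' assume a: "a \<in> kcarrier (A z x)" and a': "a' \<in> kcarrier (A x y)"
    have "Psi \<gamma> z x y (cn z x y (tsimple (A z x) (A x y) (BB z x y) a a')) = Psi \<gamma> z x y (kmK z x x y a (rho x y a'))"
      using cn_simple[OF z x y a a'] by (simp add: bsimple_def')
    also have "\<dots> = tmB z x x y a (Psi \<gamma> x x y (rho x y a'))" by (rule Psi_kmK[OF z x y glin a rho_in[OF x y a']])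
    also have "\<dots> = tmB z x x y a (tsimple (A x x) (A x y) (BB x x y) (one x) a')" using g2 a' by (simp add: bsimple_def')
    also have "\<dots> = tsimple (A z x) (A x y) (BB z x y) a a'"
      using tmap_simple[OF okB[OF z x x y a] one_closed[OF x] a'] a z x by simp
    finally show "Psi \<gamma> z x y (cn z x y (tsimple (A z x) (A x y) (BB z x y) a a')) = tsimple (A z x) (A x y) (BB z x y) a a'" .
  qed
  show "bij_betw (can H hone A mul rho z x y) (kcarrier (btens H hone A mul rho z x y)) (kcarrier (ktens (A z y) (H x y)))"
  proof (rule bij_betw_byWitness[where f' = "Psi \<gamma> z x y"])
    show "\<forall>t\<in>kcarrier (BT z x y). Psi \<gamma> z x y (cn z x y t) = t" using left by blast
    show "\<forall>s\<in>kcarrier (KT z y x y). cn z x y (Psi \<gamma> z x y s) = s" using cn_Psi[OF z x y glin g1] by blast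
    show "cn z x y ` kcarrier (BT z x y) \<subseteq> kcarrier (KT z y x y)" using linmapD(1)[OF cn_linmap[OF z x y]] by blast
    show "Psi \<gamma> z x y ` kcarrier (KT z y x y) \<subseteq> kcarrier (BT z x y)" using linmapD(1)[OF Psi_linmap[OF z x y glin]] by blast
  qed
qed

lemma main:
  shows "((\<forall>x\<in>X. \<forall>y\<in>X. \<forall>z\<in>X.
             bij_betw (can H hone A mul rho z x y)
               (kcarrier (btens H hone A mul rho z x y)) (kcarrier (ktens (A z y) (H x y))))
        \<longleftrightarrow>
          (\<forall>x\<in>X. \<forall>y\<in>X.
             bij_betw (can H hone A mul rho y x y)
               (kcarrier (btens H hone A mul rho y x y)) (kcarrier (ktens (A y y) (H x y))) \<and>
             (\<exists>g. linmap (ktens (A x y) (H x y)) (btens H hone A mul rho x x y) g \<and>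
                  (\<forall>t\<in>kcarrier (btens H hone A mul rho x x y).
                     g (can H hone A mul rho x x y t) = t))))
       \<and>
         ((\<forall>x\<in>X. \<forall>y\<in>X.
             bij_betw (can H hone A mul rho y x y)
               (kcarrier (btens H hone A mul rho y x y)) (kcarrier (ktens (A y y) (H x y))) \<and>
             (\<exists>g. linmap (ktens (A x y) (H x y)) (btens H hone A mul rho x x y) g \<and>
                  (\<forall>t\<in>kcarrier (btens H hone A mul rho x x y).
                     g (can H hone A mul rho x x y t) = t)))
        \<longleftrightarrow>
          (\<forall>x\<in>X. \<forall>y\<in>X. \<exists>\<gamma>.
             linmap (H x y) (btens H hone A mul rho y x y) \<gamma> \<and>
             (\<forall>h\<in>kcarrier (H x y).
                can H hone A mul rho y x y (\<gamma> h) = ksimple (A y y) (H x y) (one y) h) \<and>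
             (\<forall>a\<in>kcarrier (A x y).
                klift (A x y) (H x y) (btens H hone A mul rho x x y)
                  (\<lambda>(a', h). tmap (A y x) (A x y) (bbal A mul (coinv H hone A rho x) y x y)
                                  (A x x) (A x y) (bbal A mul (coinv H hone A rho x) x x y)
                                  (mul x y x a') id (\<gamma> h))
                  (rho x y a)
                = bsimple H hone A mul rho x x y (one x) a)))"
  using imp12 imp23 imp31 by blast

end


theorem theorem3p5:
  fixes X :: "'x set"
    and H :: "'x \<Rightarrow> 'x \<Rightarrow> ('h, 'k::comm_ring_1) kmod"
    and hmul :: "'x \<Rightarrow> 'x \<Rightarrow> 'x \<Rightarrow> 'h \<Rightarrow> 'h \<Rightarrow> 'h" and hone :: "'x \<Rightarrow> 'h"
    and D :: "'x \<Rightarrow> 'x \<Rightarrow> 'h \<Rightarrow> ('h \<times> 'h \<Rightarrow> int) set" and e :: "'x \<Rightarrow> 'x \<Rightarrow> 'h \<Rightarrow> 'k"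
    and A :: "'x \<Rightarrow> 'x \<Rightarrow> ('a, 'k) kmod"
    and mul :: "'x \<Rightarrow> 'x \<Rightarrow> 'x \<Rightarrow> 'a \<Rightarrow> 'a \<Rightarrow> 'a" and one :: "'x \<Rightarrow> 'a"
    and rho :: "'x \<Rightarrow> 'x \<Rightarrow> 'a \<Rightarrow> ('a \<times> 'h \<Rightarrow> int) set"
  assumes "semi_hopf_cat X H hmul hone D e"
    and "rcomod_cat X H hmul hone D e A mul one rho"
  shows "((\<forall>x\<in>X. \<forall>y\<in>X. \<forall>z\<in>X.
             bij_betw (can H hone A mul rho z x y)
               (kcarrier (btens H hone A mul rho z x y)) (kcarrier (ktens (A z y) (H x y))))
        \<longleftrightarrow>
          (\<forall>x\<in>X. \<forall>y\<in>X.
             bij_betw (can H hone A mul rho y x y)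
               (kcarrier (btens H hone A mul rho y x y)) (kcarrier (ktens (A y y) (H x y))) \<and>
             (\<exists>g. linmap (ktens (A x y) (H x y)) (btens H hone A mul rho x x y) g \<and>
                  (\<forall>t\<in>kcarrier (btens H hone A mul rho x x y).
                     g (can H hone A mul rho x x y t) = t))))
       \<and>
         ((\<forall>x\<in>X. \<forall>y\<in>X.
             bij_betw (can H hone A mul rho y x y)
               (kcarrier (btens H hone A mul rho y x y)) (kcarrier (ktens (A y y) (H x y))) \<and>
             (\<exists>g. linmap (ktens (A x y) (H x y)) (btens H hone A mul rho x x y) g \<and>
                  (\<forall>t\<in>kcarrier (btens H hone A mul rho x x y).
                     g (can H hone A mul rho x x y t) = t)))
        \<longleftrightarrow>
          (\<forall>x\<in>X. \<forall>y\<in>X. \<exists>\<gamma>.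
             linmap (H x y) (btens H hone A mul rho y x y) \<gamma> \<and>
             (\<forall>h\<in>kcarrier (H x y).
                can H hone A mul rho y x y (\<gamma> h) = ksimple (A y y) (H x y) (one y) h) \<and>
             (\<forall>a\<in>kcarrier (A x y).
                klift (A x y) (H x y) (btens H hone A mul rho x x y)
                  (\<lambda>(a', h). tmap (A y x) (A x y) (bbal A mul (coinv H hone A rho x) y x y)
                                  (A x x) (A x y) (bbal A mul (coinv H hone A rho x) x x y)
                                  (mul x y x a') id (\<gamma> h))
                  (rho x y a)
                = bsimple H hone A mul rho x x y (one x) a)))"
proof -
  interpret gal X H hmul hone D e A mul one rho by unfold_locales (rule assms)+
  show ?thesis by (rule main)
qed


end
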